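(* Let $\alpha,\beta\vdash n$ and define integers $b^\mu_{\alpha,\beta}$ by $\mathbf{C}_\alpha(\mathbf{z})\star\mathbf{C}_\beta(\mathbf{z})=\sum_{\mu\vdash n}b^\mu_{\alpha,\beta}\mathbf{C}_\mu(\mathbf{z})$. For a finite set $U$ of size $n$ let $\mathbf{C}^\mu_{\alpha,\beta}[U]=\{(s,t)\in\mathbf{C}_\alpha[U]\times\mathbf{C}_\beta[U]:\mathrm{Aut}(s)\cap\mathrm{Aut}(t)\simeq\langle\sigma_\mu\rangle\}$, where $\mathrm{Aut}(s)\le S_U$ is the stabiliser of $s$ and $\simeq$ means equal to $f\langle\sigma_\mu\rangle f^{-1}$ for some bijection $f:[n]\to U$. Then $\mathbf{C}^\mu_{\alpha,\beta}$ is a subspecies of $\mathbf{C}_\alpha\times\mathbf{C}_\beta$, and $b^\mu_{\alpha,\beta}$ equals the number of isomorphism types (unlabelled structures) of $\mathbf{C}^\mu_{\alpha,\beta}$, i.e. the number of orbits of $S_n$ on $\mathbf{C}^\mu_{\alpha,\beta}[[n]]$.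
   Context: For $H\le S_n$, $(X^n/H)[U]=\{\lambda H:\lambda:[n]\to U\text{ bijection}\}$, with $S_U$ acting by left composition. $\sigma_\alpha$ is the standard permutation of cycle type $\alpha$ (cycles filled with $1,\ldots,n$ in increasing order), $\mathbf{C}_\alpha=X^n/\langle\sigma_\alpha\rangle$, and $\mathbf{C}_\alpha(\mathbf{z})=\frac{1}{o(\sigma_\alpha)}\sum_{g\in\langle\sigma_\alpha\rangle}p_{\lambda(g)}$ is its cycle index series ($\lambda(g)$ the cycle type, $p_\nu$ power sums); $\{\mathbf{C}_\mu(\mathbf{z})\}_{\mu\vdash n}$ is a basis of $\Lambda_n\otimes\mathbb{Q}$. The Kronecker product $\star$ on $\Lambda_n$ is the bilinear product with $p_\lambda\star p_\nu=\delta_{\lambda\nu}z_\lambda p_\lambda$, $z_\lambda=\prod_i i^{m_i}m_i!$ ($m_i$ the multiplicity of $i$ in $\lambda$); it is the cycle index of the Cartesian product $(F\times G)[U]=F[U]\times G[U]$. *)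

theory Defs
  imports Complex_Main "HOL-Library.Multiset" "HOL-Library.FuncSet" "HOL-Combinatorics.Permutations"
begin

definition partitions :: "nat \<Rightarrow> nat multiset set" where
  "partitions n = {\<mu>. 0 \<notin># \<mu> \<and> sum_mset \<mu> = n}"

text \<open>Standard permutation: cycles of lengths given by the parts (taken in weakly
decreasing order), filled consecutively with 1,...,n in increasing order.\<close>
fun stdp :: "nat \<Rightarrow> nat list \<Rightarrow> nat \<Rightarrow> nat" where
  "stdp off [] i = i"
| "stdp off (a # as) i =
     (if off < i \<and> i \<le> off + a then (if i = off + a then off + 1 else i + 1)
      else stdp (off + a) as i)"

definition sigma :: "nat multiset \<Rightarrow> nat \<Rightarrow> nat" where
  "sigma \<alpha> = stdp 0 (rev (sorted_list_of_multiset \<alpha>))"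

definition cgroup :: "nat multiset \<Rightarrow> (nat \<Rightarrow> nat) set" where
  "cgroup \<alpha> = {(sigma \<alpha>) ^^ k | k. True}"

definition porbit :: "(nat \<Rightarrow> nat) \<Rightarrow> nat \<Rightarrow> nat set" where
  "porbit g x = {(g ^^ k) x | k. True}"

definition cycle_type :: "nat \<Rightarrow> (nat \<Rightarrow> nat) \<Rightarrow> nat multiset" where
  "cycle_type n g = image_mset card (mset_set (porbit g ` {1..n}))"

text \<open>An element of Lambda_n (x) Q is represented by its coefficient function
\<open>\<nu> \<mapsto> [p_\<nu>]\<close> on partitions (supported on partitions of n).\<close>
type_synonym symf = "nat multiset \<Rightarrow> rat"

definition zee :: "nat multiset \<Rightarrow> nat" where
  "zee lam = (\<Prod>i\<in>set_mset lam. i ^ count lam i * fact (count lam i))"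

definition kron :: "symf \<Rightarrow> symf \<Rightarrow> symf" where
  "kron f g = (\<lambda>\<nu>. of_nat (zee \<nu>) * f \<nu> * g \<nu>)"

text \<open>Cycle index series C_alpha(z) = (1/o(sigma_alpha)) sum_{g in <sigma_alpha>} p_{lambda(g)}.\<close>
definition Cser :: "nat multiset \<Rightarrow> symf" where
  "Cser \<alpha> = (\<lambda>\<nu>. of_nat (card {g \<in> cgroup \<alpha>. cycle_type (sum_mset \<alpha>) g = \<nu>})
                    / of_nat (card (cgroup \<alpha>)))"

definition bijs :: "nat \<Rightarrow> 'a set \<Rightarrow> (nat \<Rightarrow> 'a) set" where
  "bijs n U = {l. bij_betw l {1..n} U \<and> l \<in> extensional {1..n}}"

definition coset :: "(nat \<Rightarrow> 'a) \<Rightarrow> (nat \<Rightarrow> nat) set \<Rightarrow> (nat \<Rightarrow> 'a) set" where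
  "coset l H = (\<lambda>h. l \<circ> h) ` H"

definition Xquot :: "nat \<Rightarrow> (nat \<Rightarrow> nat) set \<Rightarrow> 'a set \<Rightarrow> (nat \<Rightarrow> 'a) set set" where
  "Xquot n H U = {coset l H | l. l \<in> bijs n U}"

definition Cspec :: "nat multiset \<Rightarrow> 'a set \<Rightarrow> (nat \<Rightarrow> 'a) set set" where
  "Cspec \<alpha> U = Xquot (sum_mset \<alpha>) (cgroup \<alpha>) U"

definition act :: "nat \<Rightarrow> ('a \<Rightarrow> 'b) \<Rightarrow> (nat \<Rightarrow> 'a) set \<Rightarrow> (nat \<Rightarrow> 'b) set" where
  "act n \<tau> s = (\<lambda>l. restrict (\<tau> \<circ> l) {1..n}) ` s"

definition Aut :: "nat \<Rightarrow> 'a set \<Rightarrow> (nat \<Rightarrow> 'a) set \<Rightarrow> ('a \<Rightarrow> 'a) set" where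
  "Aut n U s = {\<tau>. \<tau> permutes U \<and> act n \<tau> s = s}"

definition conjg :: "nat \<Rightarrow> 'a set \<Rightarrow> (nat \<Rightarrow> 'a) \<Rightarrow> (nat \<Rightarrow> nat) \<Rightarrow> ('a \<Rightarrow> 'a)" where
  "conjg n U f g = (\<lambda>x. if x \<in> U then f (g (inv_into {1..n} f x)) else x)"

definition iso_sub :: "nat \<Rightarrow> 'a set \<Rightarrow> ('a \<Rightarrow> 'a) set \<Rightarrow> (nat \<Rightarrow> nat) set \<Rightarrow> bool" where
  "iso_sub n U A H = (\<exists>f. bij_betw f {1..n} U \<and> A = conjg n U f ` H)"

definition Cmu :: "nat multiset \<Rightarrow> nat multiset \<Rightarrow> nat multiset \<Rightarrow> 'a set
                   \<Rightarrow> ((nat \<Rightarrow> 'a) set \<times> (nat \<Rightarrow> 'a) set) set" where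
  "Cmu \<alpha> \<beta> \<mu> U = {(s, t). s \<in> Cspec \<alpha> U \<and> t \<in> Cspec \<beta> U \<and>
       iso_sub (sum_mset \<alpha>) U (Aut (sum_mset \<alpha>) U s \<inter> Aut (sum_mset \<alpha>) U t) (cgroup \<mu>)}"

definition num_types :: "nat multiset \<Rightarrow> nat multiset \<Rightarrow> nat multiset \<Rightarrow> nat" where
  "num_types \<alpha> \<beta> \<mu> = (let n = sum_mset \<alpha> in
     card ((\<lambda>(s, t). {(act n \<pi> s, act n \<pi> t) | \<pi>. \<pi> permutes {1..n}}) ` Cmu \<alpha> \<beta> \<mu> {1..n}))"

end

theory Submission
  imports Defs
begin
section \<open>Orbits of bijections of finite sets\<close>

lemma porbit_self: "x \<in> porbit g x"
  unfolding porbit_def by (auto intro: exI[of _ 0])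

lemma funpow_in: "bij_betw g A A \<Longrightarrow> x \<in> A \<Longrightarrow> (g ^^ k) x \<in> A"
  using bij_betw_funpow[of g A k] by (auto dest: bij_betw_imp_surj_on)

lemma porbit_subset: "bij_betw g A A \<Longrightarrow> x \<in> A \<Longrightarrow> porbit g x \<subseteq> A"
  unfolding porbit_def using funpow_in[of g A x] by auto

lemma exists_period:
  assumes "finite A" "bij_betw g A A" "x \<in> A"
  shows "\<exists>p>0. (g ^^ p) x = x"
proof -
  have "(\<lambda>k. (g ^^ k) x) ` {0..card A} \<subseteq> A" using funpow_in[OF assms(2,3)] by auto
  hence "\<not> inj_on (\<lambda>k. (g ^^ k) x) {0..card A}"
  proof (intro notI)
    assume "inj_on (\<lambda>k. (g ^^ k) x) {0..card A}"
    from card_inj_on_le[OF this \<open>_ \<subseteq> A\<close> assms(1)] show False by simp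
  qed
  then obtain i j where ij: "i \<in> {0..card A}" "j \<in> {0..card A}" "i \<noteq> j"
     "(g ^^ i) x = (g ^^ j) x" unfolding inj_on_def by blast
  { fix i j assume lt: "i < j" and eq: "(g ^^ i) x = (g ^^ j) x"
    have "(g ^^ j) x = (g ^^ (i + (j - i))) x" using lt by simp
    also have "\<dots> = (g ^^ i) ((g ^^ (j - i)) x)" by (simp add: funpow_add)
    finally have e2: "(g ^^ i) x = (g ^^ i) ((g ^^ (j - i)) x)" using eq by simp
    have "inj_on (g ^^ i) A" using bij_betw_funpow[OF assms(2)] bij_betw_def by blast
    from inj_onD[OF this e2 assms(3) funpow_in[OF assms(2,3)]]
    have "(g ^^ (j - i)) x = x" by simp
    hence "\<exists>p>0. (g ^^ p) x = x" using lt by (intro exI[of _ "j - i"]) auto }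
  note * = this
  show ?thesis
  proof (cases "i < j")
    case True thus ?thesis using * ij(4) by blast
  next
    case False hence "j < i" using ij(3) by linarith
    thus ?thesis using *[of j i] ij(4) by simp
  qed
qed

definition per :: "(nat \<Rightarrow> nat) \<Rightarrow> nat \<Rightarrow> nat" where
  "per g x = (LEAST p. p > 0 \<and> (g ^^ p) x = x)"

lemma per_props:
  assumes "finite A" "bij_betw g A A" "x \<in> A"
  shows "per g x > 0" "(g ^^ per g x) x = x"
    "\<And>p. 0 < p \<Longrightarrow> p < per g x \<Longrightarrow> (g ^^ p) x \<noteq> x"
  using LeastI_ex[OF exists_period[OF assms]] not_less_Least[of _ "\<lambda>p. p > 0 \<and> (g ^^ p) x = x"]
  unfolding per_def by auto

lemma funpow_mod_per:
  assumes "finite A" "bij_betw g A A" "x \<in> A"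
  shows "(g ^^ k) x = (g ^^ (k mod per g x)) x"
  using funpow_mod_eq[OF per_props(2)[OF assms]] by simp

lemma funpow_eq_iff_mod:
  assumes "finite A" "bij_betw g A A" "x \<in> A"
  shows "(g ^^ i) x = (g ^^ j) x \<longleftrightarrow> i mod per g x = j mod per g x"
proof
  let ?p = "per g x"
  have inj: "inj_on (g ^^ k) A" for k using bij_betw_funpow[OF assms(2)] bij_betw_def by blast
  { fix i j assume lt: "i < j" "j < ?p" and eq: "(g ^^ i) x = (g ^^ j) x"
    have "(g ^^ j) x = (g ^^ (i + (j - i))) x" using lt by simp
    also have "\<dots> = (g ^^ i) ((g ^^ (j - i)) x)" by (simp add: funpow_add)
    finally have e2: "(g ^^ i) x = (g ^^ i) ((g ^^ (j - i)) x)" using eq by simp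
    from inj_onD[OF inj[of i] e2 assms(3) funpow_in[OF assms(2,3)]]
    have "(g ^^ (j - i)) x = x" by simp
    moreover have "j - i < ?p" "0 < j - i" using lt by linarith+
    ultimately have False using per_props(3)[OF assms, of "j - i"] by blast }
  note * = this
  assume "(g ^^ i) x = (g ^^ j) x"
  hence "(g ^^ (i mod ?p)) x = (g ^^ (j mod ?p)) x" using funpow_mod_per[OF assms, of i] funpow_mod_per[OF assms, of j] by simp
  moreover have "i mod ?p < ?p" "j mod ?p < ?p" using per_props(1)[OF assms] by auto
  ultimately show "i mod ?p = j mod ?p" using *[of "i mod ?p" "j mod ?p"] *[of "j mod ?p" "i mod ?p"]
    by (cases "i mod ?p < j mod ?p"; cases "j mod ?p < i mod ?p") auto
next
  assume "i mod per g x = j mod per g x"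
  thus "(g ^^ i) x = (g ^^ j) x" using funpow_mod_per[OF assms, of i] funpow_mod_per[OF assms, of j] by simp
qed

lemma porbit_eq_image:
  assumes "finite A" "bij_betw g A A" "x \<in> A"
  shows "porbit g x = (\<lambda>k. (g ^^ k) x) ` {..<per g x}"
proof -
  { fix k have "(g ^^ k) x \<in> (\<lambda>k. (g ^^ k) x) ` {..<per g x}"
      using funpow_mod_per[OF assms, of k] per_props(1)[OF assms]
      by (intro image_eqI[of _ _ "k mod per g x"]) auto }
  thus ?thesis unfolding porbit_def by auto
qed

lemma card_porbit:
  assumes "finite A" "bij_betw g A A" "x \<in> A"
  shows "card (porbit g x) = per g x"
proof -
  have "inj_on (\<lambda>k. (g ^^ k) x) {..<per g x}"
    using funpow_eq_iff_mod[OF assms] by (auto simp: inj_on_def)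
  thus ?thesis using porbit_eq_image[OF assms] by (simp add: card_image)
qed

lemma finite_porbit:
  assumes "finite A" "bij_betw g A A" "x \<in> A"
  shows "finite (porbit g x)"
  using porbit_eq_image[OF assms] by simp

lemma porbit_funpow:
  assumes "finite A" "bij_betw g A A" "x \<in> A"
  shows "porbit g ((g ^^ k) x) = porbit g x"
proof
  show "porbit g ((g ^^ k) x) \<subseteq> porbit g x"
  proof
    fix y assume "y \<in> porbit g ((g ^^ k) x)"
    then obtain m where "y = (g ^^ m) ((g ^^ k) x)" unfolding porbit_def by auto
    hence "y = (g ^^ (m + k)) x" by (simp add: funpow_add)
    thus "y \<in> porbit g x" unfolding porbit_def by auto
  qed
  show "porbit g x \<subseteq> porbit g ((g ^^ k) x)"
  proof
    fix y assume "y \<in> porbit g x"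
    then obtain m where m: "y = (g ^^ m) x" unfolding porbit_def by auto
    let ?p = "per g x"
    have "(g ^^ (m + ?p * k - k)) ((g ^^ k) x) = (g ^^ (m + ?p * k)) x"
    proof -
      have "k \<le> m + ?p * k" using per_props(1)[OF assms] by (simp add: trans_le_add2)
      thus ?thesis by (metis funpow_add le_add_diff_inverse2 o_apply)
    qed
    also have "\<dots> = y" unfolding m using funpow_eq_iff_mod[OF assms] by simp
    finally show "y \<in> porbit g ((g ^^ k) x)" unfolding porbit_def by auto
  qed
qed

lemma porbit_eq:
  assumes "finite A" "bij_betw g A A" "x \<in> A" "y \<in> porbit g x"
  shows "porbit g y = porbit g x"
proof -
  obtain k where "y = (g ^^ k) x" using assms(4) unfolding porbit_def by auto
  thus ?thesis using porbit_funpow[OF assms(1-3)] by simp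
qed

lemma porbit_disjoint:
  assumes "finite A" "bij_betw g A A" "x \<in> A" "y \<in> A" "porbit g x \<noteq> porbit g y"
  shows "porbit g x \<inter> porbit g y = {}"
  using porbit_eq[OF assms(1,2,3)] porbit_eq[OF assms(1,2,4)] assms(5) by blast

lemma bij_betw_orbit_compl:
  assumes "finite A" "bij_betw g A A" "x \<in> A"
  shows "bij_betw g (A - porbit g x) (A - porbit g x)"
proof -
  have inv: "y \<in> porbit g x \<Longrightarrow> g y \<in> porbit g x" for y
    unfolding porbit_def by (auto intro: exI[of _ "Suc k" for k])
  have inv2: "y \<in> A \<Longrightarrow> g y \<in> porbit g x \<Longrightarrow> y \<in> porbit g x" for y
  proof -
    assume "y \<in> A" "g y \<in> porbit g x"
    hence "porbit g (g y) = porbit g x" using porbit_eq[OF assms] by blast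
    moreover have "porbit g (g y) = porbit g y" using porbit_funpow[OF assms(1,2) \<open>y\<in>A\<close>, of 1] by simp
    ultimately show ?thesis using porbit_self by blast
  qed
  have "g ` (A - porbit g x) = g ` A - g ` porbit g x"
    using assms(2) porbit_subset[OF assms(2,3)] unfolding bij_betw_def
    by (intro inj_on_image_set_diff[of g A]) auto
  also have "g ` porbit g x = porbit g x"
  proof -
    have "g ` porbit g x \<subseteq> porbit g x" using inv by auto
    moreover have "inj_on g (porbit g x)" using assms(2) porbit_subset[OF assms(2,3)]
      unfolding bij_betw_def by (metis inj_on_subset)
    ultimately show ?thesis using finite_porbit[OF assms]
      by (simp add: card_image card_subset_eq)
  qed
  finally show ?thesis using assms(2) unfolding bij_betw_def
    by (auto intro: inj_on_subset)
qed

definition ct :: "nat set \<Rightarrow> (nat \<Rightarrow> nat) \<Rightarrow> nat multiset" where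
  "ct A g = image_mset card (mset_set (porbit g ` A))"

lemma ct_remove:
  assumes "finite A" "bij_betw g A A" "x \<in> A"
  shows "ct A g = add_mset (per g x) (ct (A - porbit g x) g)"
proof -
  let ?C = "porbit g x"
  have "porbit g ` A = insert ?C (porbit g ` (A - ?C))"
  proof (intro equalityI subsetI)
    fix Q assume "Q \<in> porbit g ` A"
    then obtain y where y: "y \<in> A" "Q = porbit g y" by blast
    show "Q \<in> insert ?C (porbit g ` (A - ?C))"
    proof (cases "y \<in> ?C")
      case True thus ?thesis using porbit_eq[OF assms True] y by simp
    next
      case False thus ?thesis using y by blast
    qed
  next
    fix Q assume "Q \<in> insert ?C (porbit g ` (A - ?C))"
    thus "Q \<in> porbit g ` A" using assms(3) by blast
  qed
  moreover have "?C \<notin> porbit g ` (A - ?C)"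
  proof
    assume "?C \<in> porbit g ` (A - ?C)"
    then obtain y where "y \<in> A - ?C" "?C = porbit g y" by blast
    thus False using porbit_self[of y g] by simp
  qed
  ultimately show ?thesis unfolding ct_def using card_porbit[OF assms] assms(1)
    by simp
qed

definition Conj :: "nat set \<Rightarrow> nat set \<Rightarrow> (nat \<Rightarrow> nat) \<Rightarrow> (nat \<Rightarrow> nat) \<Rightarrow> (nat \<Rightarrow> nat) set" where
  "Conj A B g s = {f. bij_betw f A B \<and> (\<forall>x\<in>A. f (g x) = s (f x)) \<and> (\<forall>x. x \<notin> A \<longrightarrow> f x = x)}"

lemma finite_Conj:
  assumes "finite A" "finite B"
  shows "finite (Conj A B g s)"
proof -
  have "Conj A B g s \<subseteq> (\<lambda>h x. if x \<in> A then h x else x) ` (A \<rightarrow>\<^sub>E B)"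
  proof
    fix f assume f: "f \<in> Conj A B g s"
    hence "f = (\<lambda>x. if x \<in> A then restrict f A x else x)" unfolding Conj_def by auto
    moreover have "restrict f A \<in> A \<rightarrow>\<^sub>E B" using f unfolding Conj_def bij_betw_def by auto
    ultimately show "f \<in> (\<lambda>h x. if x \<in> A then h x else x) ` (A \<rightarrow>\<^sub>E B)" by blast
  qed
  moreover have "finite (A \<rightarrow>\<^sub>E B)" using assms by (simp add: finite_PiE)
  ultimately show ?thesis using finite_subset by blast
qed

lemma zee_add: "zee (add_mset L M) = L * (count M L + 1) * zee M"
proof (cases "L \<in># M")
  case False
  have "zee (add_mset L M) = (L ^ 1 * fact 1) *
     (\<Prod>i\<in>set_mset M. i ^ count (add_mset L M) i * fact (count (add_mset L M) i))"
  proof -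
    have c0: "count M L = 0" using False by (simp add: not_in_iff)
    show ?thesis unfolding zee_def set_mset_add_mset_insert
      by (subst prod.insert) (use False c0 in auto)
  qed
  also have "(\<Prod>i\<in>set_mset M. i ^ count (add_mset L M) i * fact (count (add_mset L M) i))
     = zee M" unfolding zee_def using False by (intro prod.cong) auto
  moreover have "count M L = 0" using False by (simp add: not_in_iff)
  ultimately show ?thesis by simp
next
  case True
  let ?F = "\<lambda>N i. i ^ count N i * fact (count N i) :: nat"
  have s: "set_mset (add_mset L M) = set_mset M" using True by auto
  have "zee (add_mset L M) = ?F (add_mset L M) L * (\<Prod>i\<in>set_mset M - {L}. ?F (add_mset L M) i)"
    unfolding zee_def s using True by (simp add: prod.remove)
  also have "(\<Prod>i\<in>set_mset M - {L}. ?F (add_mset L M) i) = (\<Prod>i\<in>set_mset M - {L}. ?F M i)"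
    by (intro prod.cong) auto
  also have "?F (add_mset L M) L = L * (count M L + 1) * ?F M L"
    by (simp add: fact_Suc algebra_simps)
  also have "L * (count M L + 1) * ?F M L * (\<Prod>i\<in>set_mset M - {L}. ?F M i)
      = L * (count M L + 1) * zee M"
    unfolding zee_def using True by (simp add: prod.remove mult.assoc)
  finally show ?thesis .
qed

lemma conj_pow:
  assumes "bij_betw g A A" "\<forall>x\<in>A. f (g x) = s (f x)" "x \<in> A"
  shows "f ((g ^^ k) x) = (s ^^ k) (f x)"
proof (induction k)
  case (Suc k)
  have "(g ^^ k) x \<in> A" using funpow_in[OF assms(1,3)] .
  thus ?case using Suc assms(2) by simp
qed simp

lemma card_BL:
  assumes "finite B" "bij_betw s B B"
  shows "card {b\<in>B. per s b = L} = L * count (ct B s) L"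
proof -
  let ?O = "{Q \<in> porbit s ` B. card Q = L}"
  have c: "count (ct B s) L = card ?O" unfolding ct_def
    using assms(1) by (simp add: count_image_mset_eq_card_vimage)
  have u: "{b\<in>B. per s b = L} = \<Union> ?O"
  proof (intro equalityI subsetI)
    fix b assume "b \<in> {b\<in>B. per s b = L}"
    thus "b \<in> \<Union> ?O" using card_porbit[OF assms, of b] porbit_self[of b s] by auto
  next
    fix b assume "b \<in> \<Union> ?O"
    then obtain y where y: "y \<in> B" "b \<in> porbit s y" "card (porbit s y) = L" by auto
    have "porbit s b = porbit s y" using porbit_eq[OF assms y(1,2)] .
    moreover have "b \<in> B" using porbit_subset[OF assms(2) y(1)] y(2) by auto
    ultimately show "b \<in> {b\<in>B. per s b = L}" using card_porbit[OF assms, of b] y(3) by simp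
  qed
  have "card (\<Union> ?O) = sum card ?O"
  proof (rule card_Union_disjoint)
    show "disjoint ?O" unfolding disjoint_def
    proof (intro ballI impI)
      fix P Q assume "P \<in> ?O" "Q \<in> ?O" "P \<noteq> Q"
      then obtain x y where "x \<in> B" "y \<in> B" "P = porbit s x" "Q = porbit s y" by auto
      thus "P \<inter> Q = {}" using porbit_disjoint[OF assms, of x y] \<open>P \<noteq> Q\<close> by simp
    qed
    show "\<And>Q. Q \<in> ?O \<Longrightarrow> finite Q" using finite_porbit[OF assms] by auto
  qed
  also have "sum card ?O = sum (\<lambda>_. L) ?O" by (intro sum.cong) auto
  finally show ?thesis using u c by simp
qed

lemma ct_empty: "ct {} g = {#}" unfolding ct_def by simp

lemma ct_nonempty: "finite B \<Longrightarrow> B \<noteq> {} \<Longrightarrow> ct B s \<noteq> {#}"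
  unfolding ct_def by (simp add: mset_set_empty_iff)

lemma count_conj:
  assumes "finite A" "bij_betw g A A" "finite B" "bij_betw s B B"
  shows "card (Conj A B g s) = (if ct A g = ct B s then zee (ct A g) else 0)"
  using assms
proof (induction "card A" arbitrary: A B rule: less_induct)
  case less
  note hA = less.prems(1,2) and hB = less.prems(3,4)
  show ?case
  proof (cases "A = {}")
    case True
    show ?thesis
    proof (cases "B = {}")
      case True
      have "Conj A B g s = {id}" unfolding Conj_def using \<open>A = {}\<close> True by auto
      thus ?thesis using \<open>A = {}\<close> True by (simp add: ct_empty zee_def)
    next
      case False
      have "Conj A B g s = {}" unfolding Conj_def using \<open>A = {}\<close> False
        by (auto simp: bij_betw_def)
      moreover have "ct A g \<noteq> ct B s" using ct_nonempty[OF hB(1) False] \<open>A = {}\<close>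
        by (simp add: ct_empty)
      ultimately show ?thesis by simp
    qed
  next
    case False
    then obtain a where a: "a \<in> A" by blast
    define C where "C = porbit g a"
    define L where "L = per g a"
    define A' where "A' = A - C"
    define BL where "BL = {b\<in>B. per s b = L}"
    define dist where "dist x = (LEAST k. (g ^^ k) a = x)" for x
    have CA: "C \<subseteq> A" unfolding C_def using porbit_subset[OF hA(2) a] .
    have cardC: "card C = L" unfolding C_def L_def using card_porbit[OF hA a] .
    have Lpos: "L > 0" unfolding L_def using per_props(1)[OF hA a] .
    have dist: "x \<in> C \<Longrightarrow> (g ^^ dist x) a = x" for x
      unfolding dist_def C_def porbit_def by (auto intro: LeastI)
    have dist0: "dist a = 0" unfolding dist_def by (rule Least_eq_0) simp
    have gC: "x \<in> C \<Longrightarrow> g x \<in> C" for x unfolding C_def porbit_def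
      by (auto intro: exI[of _ "Suc k" for k])
    have bijA': "bij_betw g A' A'" unfolding A'_def C_def using bij_betw_orbit_compl[OF hA a] .
    have finA': "finite A'" unfolding A'_def using hA(1) by simp
    have ltA: "card A' < card A" unfolding A'_def
      using a porbit_self[of a g] CA hA(1) unfolding C_def by (intro psubset_card_mono) auto
    have ctA: "ct A g = add_mset L (ct A' g)" unfolding L_def A'_def C_def using ct_remove[OF hA a] .
    let ?Phi = "\<lambda>f. (f a, \<lambda>x. if x \<in> C then x else f x)"
    let ?Psi = "\<lambda>(b, f'). (\<lambda>x. if x \<in> C then (s ^^ dist x) b else f' x)"
    let ?Sig = "Sigma BL (\<lambda>b. Conj A' (B - porbit s b) g s)"
    have bij: "bij_betw ?Phi (Conj A B g s) ?Sig"
    proof (rule bij_betw_byWitness)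
      show "\<forall>f\<in>Conj A B g s. ?Psi (?Phi f) = f"
      proof
        fix f assume f: "f \<in> Conj A B g s"
        have cf: "\<forall>x\<in>A. f (g x) = s (f x)" using f unfolding Conj_def by auto
        show "?Psi (?Phi f) = f"
        proof
          fix x show "?Psi (?Phi f) x = f x"
          proof (cases "x \<in> C")
            case True
            have "(s ^^ dist x) (f a) = f ((g ^^ dist x) a)"
              using conj_pow[OF hA(2) cf a] by simp
            thus ?thesis using True dist[OF True] by simp
          qed simp
        qed
      qed
      show "\<forall>y\<in>?Sig. ?Phi (?Psi y) = y"
      proof
        fix y assume "y \<in> ?Sig"
        then obtain b f' where y: "y = (b, f')" "b \<in> BL" "f' \<in> Conj A' (B - porbit s b) g s"
          by auto
        have f'C: "x \<in> C \<Longrightarrow> f' x = x" for x using y(3) unfolding Conj_def A'_def by auto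
        have "(\<lambda>x. if x \<in> C then x else ?Psi y x) = f'"
          using f'C y(1) by (auto simp: fun_eq_iff)
        moreover have "?Psi y a = b" using y(1) dist0 porbit_self[of a g] unfolding C_def by simp
        ultimately show "?Phi (?Psi y) = y" using y(1) by simp
      qed
      show "?Phi ` Conj A B g s \<subseteq> ?Sig"
      proof
        fix z assume "z \<in> ?Phi ` Conj A B g s"
        then obtain f where z: "z = ?Phi f" and f: "f \<in> Conj A B g s" by blast
        have cf: "\<forall>x\<in>A. f (g x) = s (f x)" and bf: "bij_betw f A B"
          and of: "\<forall>x. x \<notin> A \<longrightarrow> f x = x" using f unfolding Conj_def by auto
        have fa: "f a \<in> B" using bf a by (auto simp: bij_betw_def)
        have orb: "porbit s (f a) = f ` C"
        proof -
          have "porbit s (f a) = {(s ^^ k) (f a) | k. True}" unfolding porbit_def ..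
          also have "\<dots> = {f ((g ^^ k) a) | k. True}" using conj_pow[OF hA(2) cf a] by simp
          also have "\<dots> = f ` C" unfolding C_def porbit_def by auto
          finally show ?thesis .
        qed
        have injC: "inj_on f C" using bf CA by (auto simp: bij_betw_def intro: inj_on_subset)
        have "per s (f a) = L"
          using card_porbit[OF hB fa] orb card_image[OF injC] cardC by simp
        hence "f a \<in> BL" unfolding BL_def using fa by simp
        moreover have "(\<lambda>x. if x \<in> C then x else f x) \<in> Conj A' (B - porbit s (f a)) g s"
        proof -
          let ?f' = "\<lambda>x. if x \<in> C then x else f x"
          have "bij_betw f A' (B - f ` C)"
          proof -
            have "inj_on f A" using bf by (simp add: bij_betw_def)
            hence "f ` A' = f ` A - f ` C" unfolding A'_def using CA
              by (intro inj_on_image_set_diff[of f A]) auto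
            thus ?thesis using bf unfolding bij_betw_def A'_def by (auto intro: inj_on_subset)
          qed
          hence "bij_betw ?f' A' (B - f ` C)"
            by (rule bij_betw_cong[THEN iffD1, rotated]) (auto simp: A'_def)
          moreover have "\<forall>x\<in>A'. ?f' (g x) = s (?f' x)"
          proof
            fix x assume x: "x \<in> A'"
            hence "g x \<in> A'" using bijA' by (auto simp: bij_betw_def)
            thus "?f' (g x) = s (?f' x)" using x cf unfolding A'_def by auto
          qed
          moreover have "\<forall>x. x \<notin> A' \<longrightarrow> ?f' x = x" using of unfolding A'_def by auto
          ultimately show ?thesis unfolding Conj_def orb by blast
        qed
        ultimately show "z \<in> ?Sig" using z by auto
      qed
      show "?Psi ` ?Sig \<subseteq> Conj A B g s"
      proof
        fix z assume "z \<in> ?Psi ` ?Sig"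
        then obtain b f' where z: "z = ?Psi (b, f')" and b: "b \<in> BL"
          and f': "f' \<in> Conj A' (B - porbit s b) g s" by blast
        define Cb where "Cb = porbit s b"
        have bB: "b \<in> B" and pb: "per s b = L" using b unfolding BL_def by auto
        have bf': "bij_betw f' A' (B - Cb)" and cf': "\<forall>x\<in>A'. f' (g x) = s (f' x)"
          and of': "\<forall>x. x \<notin> A' \<longrightarrow> f' x = x" using f' unfolding Conj_def Cb_def by auto
        define f where "f = ?Psi (b, f')"
        have fC: "x \<in> C \<Longrightarrow> f x = (s ^^ dist x) b" for x unfolding f_def by simp
        have fA': "x \<in> A' \<Longrightarrow> f x = f' x" for x unfolding f_def A'_def by simp
        have CbB: "Cb \<subseteq> B" unfolding Cb_def using porbit_subset[OF hB(2) bB] .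
        have cardCb: "card Cb = L" unfolding Cb_def using card_porbit[OF hB bB] pb by simp
        have modeq: "(s ^^ i) b = (s ^^ j) b \<longleftrightarrow> (g ^^ i) a = (g ^^ j) a" for i j
          using funpow_eq_iff_mod[OF hB bB] funpow_eq_iff_mod[OF hA a] pb unfolding L_def by simp
        have injC: "inj_on f C"
        proof (rule inj_onI)
          fix x y assume "x \<in> C" "y \<in> C" "f x = f y"
          hence "(g ^^ dist x) a = (g ^^ dist y) a" using fC modeq by simp
          thus "x = y" using dist \<open>x \<in> C\<close> \<open>y \<in> C\<close> by simp
        qed
        have fCsub: "f ` C \<subseteq> Cb" using fC unfolding Cb_def porbit_def by auto
        have fCeq: "f ` C = Cb"
          using card_image[OF injC] cardC cardCb fCsub finite_porbit[OF hB bB]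
          unfolding Cb_def by (metis card_subset_eq)
        have fA'eq: "f ` A' = B - Cb" using bf' fA' unfolding bij_betw_def
          by (metis image_cong)
        have injA': "inj_on f A'" using bf' fA' unfolding bij_betw_def
          by (metis inj_on_cong)
        have AU: "A = C \<union> A'" unfolding A'_def using CA by auto
        have "inj_on f A" unfolding AU inj_on_Un using injC injA' fCeq fA'eq
          by (auto simp: A'_def)
        moreover have "f ` A = B" unfolding AU image_Un fCeq fA'eq using CbB by auto
        ultimately have "bij_betw f A B" unfolding bij_betw_def by simp
        moreover have "\<forall>x\<in>A. f (g x) = s (f x)"
        proof
          fix x assume x: "x \<in> A"
          show "f (g x) = s (f x)"
          proof (cases "x \<in> C")
            case True
            have gx: "g x \<in> C" using gC[OF True] .
            have "(g ^^ dist (g x)) a = (g ^^ Suc (dist x)) a"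
              using dist[OF gx] dist[OF True] by simp
            hence "(s ^^ dist (g x)) b = (s ^^ Suc (dist x)) b"
              using modeq[of "dist (g x)" "Suc (dist x)"] by blast
            thus ?thesis using fC[OF gx] fC[OF True] by simp
          next
            case False
            hence xA': "x \<in> A'" using x unfolding A'_def by simp
            hence "g x \<in> A'" using bijA' by (auto simp: bij_betw_def)
            thus ?thesis using fA' xA' cf' by simp
          qed
        qed
        moreover have "\<forall>x. x \<notin> A \<longrightarrow> f x = x" using of' CA unfolding f_def A'_def by auto
        ultimately show "z \<in> Conj A B g s" unfolding Conj_def z f_def by blast
      qed
    qed
    have finBL: "finite BL" unfolding BL_def using hB(1) by simp
    have IH: "card (Conj A' (B - porbit s b) g s) = (if ct A g = ct B s then zee (ct A' g) else 0)"
      if "b \<in> BL" for b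
    proof -
      have bB: "b \<in> B" and pb: "per s b = L" using that unfolding BL_def by auto
      have ctB: "ct B s = add_mset L (ct (B - porbit s b) s)" using ct_remove[OF hB bB] pb by simp
      have "card (Conj A' (B - porbit s b) g s) =
        (if ct A' g = ct (B - porbit s b) s then zee (ct A' g) else 0)"
        using less.hyps[OF ltA finA' bijA'] hB(1) bij_betw_orbit_compl[OF hB bB] by simp
      thus ?thesis using ctA ctB by simp
    qed
    have "card (Conj A B g s) = card ?Sig" using bij_betw_same_card[OF bij] .
    also have "\<dots> = (\<Sum>b\<in>BL. card (Conj A' (B - porbit s b) g s))"
      using finBL hB(1) finA' by (intro card_SigmaI) (auto intro: finite_Conj)
    also have "\<dots> = card BL * (if ct A g = ct B s then zee (ct A' g) else 0)"
      using IH by simp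
    also have "\<dots> = (if ct A g = ct B s then zee (ct A g) else 0)"
    proof (cases "ct A g = ct B s")
      case True
      have "card BL = L * count (ct A g) L" unfolding BL_def using card_BL[OF hB] True by simp
      moreover have "count (ct A g) L = count (ct A' g) L + 1" using ctA by simp
      ultimately show ?thesis using True ctA zee_add[of L "ct A' g"] by (simp add: algebra_simps)
    qed simp
    finally show ?thesis .
  qed
qed

lemma stdp_cons_eq:
  "stdp off (a # as) i = (if i \<in> {off+1..off+a} then (if i = off + a then off + 1 else i + 1)
     else stdp (off + a) as i)"
  by auto

declare stdp.simps(2)[simp del]

lemma funpow_agree:
  assumes "\<forall>y\<in>R. f y = g y" "\<forall>y\<in>R. g y \<in> R" "x \<in> R"
  shows "(f ^^ k) x = (g ^^ k) x \<and> (g ^^ k) x \<in> R"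
  by (induction k) (use assms in auto)

lemma stdp_props:
  assumes "\<forall>x\<in>set as. x > 0"
  shows "(\<forall>i. i \<notin> {off+1..off+sum_list as} \<longrightarrow> stdp off as i = i) \<and>
         bij_betw (stdp off as) {off+1..off+sum_list as} {off+1..off+sum_list as} \<and>
         ct {off+1..off+sum_list as} (stdp off as) = mset as"
  using assms
proof (induction as arbitrary: off)
  case Nil
  show ?case by (simp add: ct_def bij_betw_def)
next
  case (Cons a as)
  let ?f = "stdp off (a # as)" and ?g = "stdp (off + a) as"
  let ?B = "{off+1..off+a}" and ?R' = "{off+a+1..off+a+sum_list as}"
  let ?R = "{off+1..off+sum_list (a # as)}"
  have apos: "a > 0" using Cons.prems by simp
  have IH: "(\<forall>i. i \<notin> ?R' \<longrightarrow> ?g i = i) \<and> bij_betw ?g ?R' ?R' \<and> ct ?R' ?g = mset as"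
    using Cons.IH[of "off + a"] Cons.prems by (simp add: add.assoc)
  have RU: "?R = ?B \<union> ?R'" by auto
  have disj: "?B \<inter> ?R' = {}" by auto
  have fB: "i \<in> ?B \<Longrightarrow> ?f i = (if i = off + a then off + 1 else i + 1)" for i
    by (simp add: stdp_cons_eq)
  have fR': "i \<in> ?R' \<Longrightarrow> ?f i = ?g i" for i by (simp add: stdp_cons_eq)
  have out: "\<forall>i. i \<notin> ?R \<longrightarrow> ?f i = i" using IH by (auto simp: stdp_cons_eq)
  have gR': "\<forall>y\<in>?R'. ?g y \<in> ?R'" using IH by (auto simp: bij_betw_def)
  have powR': "x \<in> ?R' \<Longrightarrow> (?f ^^ k) x = (?g ^^ k) x" for x k
    using funpow_agree[of ?R' ?f ?g x k] fR' gR' by auto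
  have powB: "(?f ^^ k) x = off + 1 + ((x - off - 1 + k) mod a)" if xB: "x \<in> ?B" for x k
  proof (induction k)
    case 0 thus ?case using xB by auto
  next
    case (Suc k)
    let ?r = "(x - off - 1 + k) mod a"
    have r: "?r < a" using apos by simp
    have "(?f ^^ Suc k) x = ?f ((?f ^^ k) x)" by simp
    also have "\<dots> = ?f (off + 1 + ?r)" using Suc.IH by simp
    also have "\<dots> = off + 1 + ((x - off - 1 + Suc k) mod a)"
    proof (cases "?r = a - 1")
      case True
      have "(x - off - 1 + Suc k) mod a = Suc ?r mod a" by (simp add: mod_Suc_eq)
      also have "\<dots> = 0" using True apos by simp
      finally show ?thesis using True r apos fB[of "off + 1 + ?r"] by simp
    next
      case False
      have "(x - off - 1 + Suc k) mod a = Suc ?r mod a" by (simp add: mod_Suc_eq)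
      also have "\<dots> = Suc ?r" using False r by simp
      moreover have "Suc ?r \<noteq> a" using False by linarith
      ultimately show ?thesis using r fB[of "off + 1 + ?r"] by simp
    qed
    finally show ?case .
  qed
  have orbB: "x \<in> ?B \<Longrightarrow> porbit ?f x = ?B" for x
  proof
    assume x: "x \<in> ?B"
    show "porbit ?f x \<subseteq> ?B"
    proof
      fix y assume "y \<in> porbit ?f x"
      then obtain k where "y = (?f ^^ k) x" unfolding porbit_def by auto
      moreover have "(x - off - 1 + k) mod a < a" using apos by simp
      ultimately show "y \<in> ?B" using powB[OF x, of k] by auto
    qed
    show "?B \<subseteq> porbit ?f x"
    proof
      fix y assume y: "y \<in> ?B"
      have "(?f ^^ (y + a - x)) x = off + 1 + ((x - off - 1 + (y + a - x)) mod a)" using powB[OF x] .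
      also have "x - off - 1 + (y + a - x) = (y - off - 1) + a" using x y by auto
      also have "((y - off - 1) + a) mod a = y - off - 1" using y by (simp only: mod_add_self2) auto
      also have "off + 1 + (y - off - 1) = y" using y by auto
      finally show "y \<in> porbit ?f x" unfolding porbit_def by (auto intro!: exI[of _ "y + a - x"])
    qed
  qed
  have orbR': "x \<in> ?R' \<Longrightarrow> porbit ?f x = porbit ?g x" for x
    unfolding porbit_def using powR' by auto
  have injB: "inj_on ?f ?B"
  proof (rule inj_onI)
    fix x y assume "x \<in> ?B" "y \<in> ?B" "?f x = ?f y"
    thus "x = y" using fB[of x] fB[of y] by (auto split: if_splits)
  qed
  have fBsub: "?f ` ?B \<subseteq> ?B" using fB apos by auto
  have fBeq: "?f ` ?B = ?B" using card_image[OF injB] fBsub by (simp add: card_subset_eq)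
  have fR'eq: "?f ` ?R' = ?R'" using IH fR' unfolding bij_betw_def by (metis image_cong)
  have injR': "inj_on ?f ?R'" using IH fR' unfolding bij_betw_def by (metis inj_on_cong)
  have d1: "?B - ?R' = ?B" "?R' - ?B = ?R'" using disj by auto
  have bij: "bij_betw ?f ?R ?R"
    unfolding bij_betw_def RU inj_on_Un d1 image_Un fBeq fR'eq using injB injR' disj by simp
  have ctf: "ct ?R ?f = add_mset a (ct ?R' ?g)"
  proof -
    have "porbit ?f ` ?R = insert ?B (porbit ?g ` ?R')"
    proof -
      have "?B \<noteq> {}" using apos by simp
      moreover have "porbit ?f ` ?B = (\<lambda>_. ?B) ` ?B" using orbB by (rule image_cong[OF refl])
      moreover have "(\<lambda>_. ?B) ` ?B = {?B}" using \<open>?B \<noteq> {}\<close> by blast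
      ultimately have "porbit ?f ` ?B = {?B}" by simp
      moreover have "porbit ?f ` ?R' = porbit ?g ` ?R'" using orbR' by auto
      ultimately show ?thesis unfolding RU image_Un by auto
    qed
    moreover have "?B \<notin> porbit ?g ` ?R'"
    proof
      assume "?B \<in> porbit ?g ` ?R'"
      then obtain y where "y \<in> ?R'" "?B = porbit ?g y" by auto
      hence "?B \<subseteq> ?R'" using porbit_subset[of ?g ?R' y] IH by auto
      moreover have "off + 1 \<in> ?B" using apos by auto
      ultimately show False by auto
    qed
    ultimately show ?thesis unfolding ct_def by simp
  qed
  show ?case using out bij ctf IH by simp
qed

lemma sigma_props:
  assumes "\<mu> \<in> partitions n"
  shows "sigma \<mu> permutes {1..n}" "cycle_type n (sigma \<mu>) = \<mu>"
proof -
  let ?xs = "rev (sorted_list_of_multiset \<mu>)"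
  have m: "mset ?xs = \<mu>" by simp
  have pos: "\<forall>x\<in>set ?xs. x > 0"
  proof
    fix x assume "x \<in> set ?xs"
    hence "x \<in># \<mu>" using m by (metis set_mset_mset)
    thus "x > 0" using assms unfolding partitions_def by (auto intro: gr0I)
  qed
  have sum: "sum_list ?xs = n"
  proof -
    have "sum_list ?xs = sum_mset (mset ?xs)" by (simp only: sum_mset_sum_list)
    thus ?thesis using m assms unfolding partitions_def by simp
  qed
  from stdp_props[OF pos, of 0] sum m
  have "(\<forall>i. i \<notin> {1..n} \<longrightarrow> sigma \<mu> i = i) \<and> bij_betw (sigma \<mu>) {1..n} {1..n}
        \<and> ct {1..n} (sigma \<mu>) = \<mu>" unfolding sigma_def by simp
  thus "sigma \<mu> permutes {1..n}" "cycle_type n (sigma \<mu>) = \<mu>"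
    by (auto intro: bij_imp_permutes simp: cycle_type_def ct_def)
qed

section \<open>Cyclic groups of permutations\<close>

definition cyc :: "(nat \<Rightarrow> nat) \<Rightarrow> (nat \<Rightarrow> nat) set" where
  "cyc c = {c ^^ k | k. True}"

lemma cgroup_cyc: "cgroup \<mu> = cyc (sigma \<mu>)" unfolding cgroup_def cyc_def ..

lemma permutes_funpow: "f permutes S \<Longrightarrow> (f ^^ k) permutes S"
  by (induction k) (auto intro: permutes_compose)

lemma cyc_perm: "c permutes S \<Longrightarrow> g \<in> cyc c \<Longrightarrow> g permutes S"
  unfolding cyc_def using permutes_funpow by blast

lemma id_in_cyc: "id \<in> cyc c" unfolding cyc_def by (auto intro: exI[of _ 0])

lemma c_in_cyc: "c \<in> cyc c" unfolding cyc_def by (auto intro: exI[of _ 1])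

lemma cyc_comp: "g \<in> cyc c \<Longrightarrow> h \<in> cyc c \<Longrightarrow> g \<circ> h \<in> cyc c"
  unfolding cyc_def by (auto simp flip: funpow_add)

lemma finite_cyc: "finite S \<Longrightarrow> c permutes S \<Longrightarrow> finite (cyc c)"
  using finite_permutations[of S] cyc_perm[of c S]
  by (metis (mono_tags, lifting) finite_subset mem_Collect_eq subsetI)

lemma perm_order:
  assumes "finite S" "c permutes S"
  shows "\<exists>oo>0. c ^^ oo = id"
proof -
  have "(\<lambda>k. c ^^ k) ` {0..card {p. p permutes S}} \<subseteq> {p. p permutes S}"
    using permutes_funpow[OF assms(2)] by auto
  hence "\<not> inj_on (\<lambda>k. c ^^ k) {0..card {p. p permutes S}}"
  proof (intro notI)
    assume "inj_on (\<lambda>k. c ^^ k) {0..card {p. p permutes S}}"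
    from card_inj_on_le[OF this \<open>_ \<subseteq> _\<close> finite_permutations[OF assms(1)]] show False by simp
  qed
  then obtain i j where ij: "i \<noteq> j" "c ^^ i = c ^^ j" unfolding inj_on_def by blast
  { fix i j :: nat assume lt: "i < j" and eq: "c ^^ i = c ^^ j"
    have "c ^^ j = c ^^ i \<circ> c ^^ (j - i)" using lt by (simp flip: funpow_add)
    hence e: "c ^^ i \<circ> id = c ^^ i \<circ> c ^^ (j - i)" using eq by simp
    have "inj (c ^^ i)" using permutes_funpow[OF assms(2)] permutes_inj by blast
    hence "c ^^ (j - i) = id" using e by (metis fun.inj_map_strong inj_eq)
    hence "\<exists>oo>0. c ^^ oo = id" using lt by (intro exI[of _ "j - i"]) auto }
  note * = this
  show ?thesis
  proof (cases "i < j")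
    case True show ?thesis using *[OF True ij(2)] .
  next
    case False hence "j < i" using ij(1) by linarith
    thus ?thesis using *[of j i] ij(2) by simp
  qed
qed

lemma funpow_id_pow: "c ^^ oo = id \<Longrightarrow> c ^^ (oo * m) = id"
proof -
  assume a: "c ^^ oo = id"
  have "c ^^ (oo * m) = (c ^^ oo) ^^ m" by (simp add: funpow_mult)
  also have "\<dots> = id" unfolding a by (induction m) auto
  finally show ?thesis .
qed

lemma cyc_shift:
  assumes "c ^^ oo = id" "oo > 0" "h \<in> cyc c"
  shows "(\<circ>) h ` cyc c = cyc c"
proof
  show "(\<circ>) h ` cyc c \<subseteq> cyc c" using cyc_comp[OF assms(3)] by auto
  show "cyc c \<subseteq> (\<circ>) h ` cyc c"
  proof
    fix g assume "g \<in> cyc c"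
    then obtain k where g: "g = c ^^ k" unfolding cyc_def by auto
    obtain i where h: "h = c ^^ i" using assms(3) unfolding cyc_def by auto
    have pw: "c ^^ (oo * m) = id" for m using funpow_id_pow[OF assms(1)] .
    have "h \<circ> c ^^ (k + i * (oo - 1)) = c ^^ (k + i * oo)"
      unfolding h funpow_add[symmetric] using assms(2)
      by (cases oo) (simp_all add: algebra_simps)
    also have "\<dots> = c ^^ k" using pw[of i] by (simp add: funpow_add mult.commute)
    finally have "c ^^ k = h \<circ> c ^^ (k + i * (oo - 1))" by simp
    moreover have "c ^^ (k + i * (oo - 1)) \<in> cyc c" unfolding cyc_def by blast
    ultimately show "g \<in> (\<circ>) h ` cyc c" unfolding g by (rule image_eqI)
  qed
qed

lemma subgroup_cyclic:
  assumes "finite S" "c permutes S" "L \<subseteq> cyc c" "id \<in> L"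
    and cl: "\<And>g h. g \<in> L \<Longrightarrow> h \<in> L \<Longrightarrow> g \<circ> h \<in> L"
  shows "\<exists>d\<in>L. L = cyc d"
proof -
  obtain oo where oo: "oo > 0" "c ^^ oo = id" using perm_order[OF assms(1,2)] by blast
  have ex: "\<exists>k. k > 0 \<and> c ^^ k \<in> L" using oo assms(4) by auto
  define d0 where "d0 = (LEAST k. k > 0 \<and> c ^^ k \<in> L)"
  have d0: "d0 > 0" "c ^^ d0 \<in> L" using LeastI_ex[OF ex] unfolding d0_def by auto
  have d0min: "\<And>k. 0 < k \<Longrightarrow> k < d0 \<Longrightarrow> c ^^ k \<notin> L"
    using not_less_Least unfolding d0_def by blast
  have powL: "(c ^^ d0) ^^ j \<in> L" for j
  proof (induction j)
    case (Suc j)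
    have e: "(c ^^ d0) ^^ Suc j = c ^^ d0 \<circ> (c ^^ d0) ^^ j" by (simp only: funpow.simps(2))
    show ?case unfolding e by (rule cl[OF d0(2) Suc])
  qed (use assms(4) in \<open>simp add: id_def\<close>)
  have "L = cyc (c ^^ d0)"
  proof
    show "cyc (c ^^ d0) \<subseteq> L" unfolding cyc_def using powL by auto
    show "L \<subseteq> cyc (c ^^ d0)"
    proof
      fix g assume gL: "g \<in> L"
      then obtain m where m: "g = c ^^ m" using assms(3) unfolding cyc_def by auto
      define q r where "q = m div d0" and "r = m mod d0"
      have mqr: "m = q * d0 + r" unfolding q_def r_def by simp
      have pw: "c ^^ (oo * t) = id" for t using funpow_id_pow[OF oo(2)] .
      have "c ^^ r = c ^^ (r + q * d0 * oo)" using pw[of "q * d0"]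
        by (simp add: funpow_add mult.commute mult.left_commute)
      also have "r + q * d0 * oo = m + d0 * (q * (oo - 1))"
        using oo(1) unfolding mqr by (cases oo) (simp_all add: algebra_simps)
      also have "c ^^ (m + d0 * (q * (oo - 1))) = g \<circ> (c ^^ d0) ^^ (q * (oo - 1))"
        unfolding m by (simp add: funpow_add funpow_mult)
      finally have "c ^^ r \<in> L" using cl[OF gL powL] by simp
      hence "r = 0" using d0min[of r] d0(1) unfolding r_def by (meson mod_less_divisor neq0_conv)
      hence "g = (c ^^ d0) ^^ q" unfolding m mqr by (simp add: funpow_mult mult.commute)
      thus "g \<in> cyc (c ^^ d0)" unfolding cyc_def by auto
    qed
  qed
  thus ?thesis using d0(2) by blast
qed

section \<open>Conjugation\<close>

lemma conjg_mp:
  assumes "bij_betw f {1..n} U"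
  shows "conjg n U f = map_permutation {1..n} f"
proof -
  have "f ` {1..n} = U" using assms by (simp add: bij_betw_def)
  thus ?thesis unfolding conjg_def map_permutation_def restrict_id_def by (auto simp: fun_eq_iff)
qed

lemma mp_funpow:
  assumes "inj_on f A" "q permutes A"
  shows "map_permutation A f (q ^^ k) = map_permutation A f q ^^ k"
proof (induction k)
  case 0 thus ?case using map_permutation_id'[OF assms(1)] by (simp add: id_def)
next
  case (Suc k)
  have "map_permutation A f (q ^^ Suc k) = map_permutation A f (q \<circ> q ^^ k)" by (simp only: funpow.simps(2))
  also have "\<dots> = map_permutation A f q \<circ> map_permutation A f (q ^^ k)"
    by (rule map_permutation_compose'[OF assms(1) permutes_funpow[OF assms(2)]])
  also have "\<dots> = map_permutation A f q ^^ Suc k" unfolding Suc.IH by (simp only: funpow.simps(2))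
  finally show ?case .
qed

lemma mp_cyc:
  assumes "inj_on f A" "c permutes A"
  shows "map_permutation A f ` cyc c = cyc (map_permutation A f c)"
proof
  show "map_permutation A f ` cyc c \<subseteq> cyc (map_permutation A f c)"
    unfolding cyc_def using mp_funpow[OF assms] by auto
  show "cyc (map_permutation A f c) \<subseteq> map_permutation A f ` cyc c"
  proof
    fix g assume "g \<in> cyc (map_permutation A f c)"
    then obtain k where "g = map_permutation A f c ^^ k" unfolding cyc_def by auto
    hence "g = map_permutation A f (c ^^ k)" using mp_funpow[OF assms] by simp
    moreover have "c ^^ k \<in> cyc c" unfolding cyc_def by auto
    ultimately show "g \<in> map_permutation A f ` cyc c" by blast
  qed
qed

section \<open>Cosets, the action, and automorphism groups\<close>

lemma act_comp: "act n \<pi> (act n \<rho> s) = act n (\<pi> \<circ> \<rho>) s"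
  unfolding act_def image_image by (intro image_cong refl) (auto simp: fun_eq_iff)

lemma act_coset:
  assumes "l \<in> extensional {1..n}" "\<forall>h\<in>H. h permutes {1..n}"
  shows "act n \<tau> (coset l H) = coset (restrict (\<tau> \<circ> l) {1..n}) H"
  unfolding act_def coset_def image_image
proof (intro image_cong refl)
  fix h assume "h \<in> H"
  hence hp: "h permutes {1..n}" using assms(2) by blast
  show "restrict (\<tau> \<circ> (l \<circ> h)) {1..n} = restrict (\<tau> \<circ> l) {1..n} \<circ> h"
  proof
    fix x show "restrict (\<tau> \<circ> (l \<circ> h)) {1..n} x = (restrict (\<tau> \<circ> l) {1..n} \<circ> h) x"
    proof (cases "x \<in> {1..n}")
      case True thus ?thesis using permutes_in_image[OF hp] by simp
    next
      case False thus ?thesis using permutes_not_in[OF hp False] by auto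
    qed
  qed
qed

lemma coset_eq_iff:
  assumes "finite S" "c permutes S"
  shows "coset l' (cyc c) = coset l (cyc c) \<longleftrightarrow> (\<exists>h\<in>cyc c. l' = l \<circ> h)"
proof
  assume "coset l' (cyc c) = coset l (cyc c)"
  moreover have "l' \<in> coset l' (cyc c)" unfolding coset_def
    using id_in_cyc[of c] by (intro image_eqI[of _ _ id]) auto
  ultimately show "\<exists>h\<in>cyc c. l' = l \<circ> h" unfolding coset_def by auto
next
  assume "\<exists>h\<in>cyc c. l' = l \<circ> h"
  then obtain h where h: "h \<in> cyc c" "l' = l \<circ> h" by blast
  obtain oo where oo: "oo > 0" "c ^^ oo = id" using perm_order[OF assms] by blast
  have "coset l' (cyc c) = (\<lambda>k. l \<circ> k) ` ((\<circ>) h ` cyc c)"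
    unfolding coset_def h(2) image_image by (simp add: o_assoc)
  also have "(\<circ>) h ` cyc c = cyc c" using cyc_shift[OF oo(2,1) h(1)] .
  finally show "coset l' (cyc c) = coset l (cyc c)" unfolding coset_def .
qed

lemma Aut_coset:
  assumes "l \<in> bijs n U" "c permutes {1..n}"
  shows "Aut n U (coset l (cyc c)) = conjg n U l ` cyc c"
proof -
  let ?N = "{1..n::nat}"
  have lb: "bij_betw l ?N U" and le: "l \<in> extensional ?N" using assms(1) unfolding bijs_def by auto
  have Hp: "\<forall>h\<in>cyc c. h permutes ?N" using cyc_perm[OF assms(2)] by blast
  have key: "restrict (\<tau> \<circ> l) ?N = l \<circ> h \<longleftrightarrow> \<tau> = conjg n U l h"
    if \<tau>: "\<tau> permutes U" and h: "h permutes ?N" for \<tau> h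
  proof
    assume e: "restrict (\<tau> \<circ> l) ?N = l \<circ> h"
    show "\<tau> = conjg n U l h"
    proof
      fix y show "\<tau> y = conjg n U l h y"
      proof (cases "y \<in> U")
        case True
        define x where "x = inv_into ?N l y"
        have x: "x \<in> ?N" "l x = y" unfolding x_def using lb True
          by (auto simp: bij_betw_def inv_into_into f_inv_into_f)
        have "\<tau> y = restrict (\<tau> \<circ> l) ?N x" using x by simp
        also have "\<dots> = l (h x)" using e by simp
        finally show ?thesis unfolding conjg_def x_def using True by simp
      next
        case False thus ?thesis unfolding conjg_def using permutes_not_in[OF \<tau> False] by simp
      qed
    qed
  next
    assume e: "\<tau> = conjg n U l h"
    show "restrict (\<tau> \<circ> l) ?N = l \<circ> h"
    proof
      fix x show "restrict (\<tau> \<circ> l) ?N x = (l \<circ> h) x"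
      proof (cases "x \<in> ?N")
        case True
        have "l x \<in> U" using lb True by (auto simp: bij_betw_def)
        moreover have "inv_into ?N l (l x) = x" using lb True by (simp add: bij_betw_def inv_into_f_f)
        ultimately show ?thesis using True unfolding e conjg_def by simp
      next
        case False
        thus ?thesis using le permutes_not_in[OF h False] by (auto simp: extensional_def)
      qed
    qed
  qed
  show ?thesis
  proof (intro equalityI subsetI)
    fix \<tau> assume "\<tau> \<in> Aut n U (coset l (cyc c))"
    hence \<tau>: "\<tau> permutes U" and ea: "act n \<tau> (coset l (cyc c)) = coset l (cyc c)"
      unfolding Aut_def by auto
    have "act n \<tau> (coset l (cyc c)) = coset (restrict (\<tau> \<circ> l) ?N) (cyc c)"
      by (rule act_coset[OF le Hp])
    hence "coset (restrict (\<tau> \<circ> l) ?N) (cyc c) = coset l (cyc c)" using ea by simp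
    then obtain h where "h \<in> cyc c" "restrict (\<tau> \<circ> l) ?N = l \<circ> h"
      using coset_eq_iff[OF finite_atLeastAtMost assms(2), of "restrict (\<tau> \<circ> l) ?N" l] by blast
    thus "\<tau> \<in> conjg n U l ` cyc c" using key[OF \<tau>] Hp by blast
  next
    fix \<tau> assume "\<tau> \<in> conjg n U l ` cyc c"
    then obtain h where h: "h \<in> cyc c" "\<tau> = conjg n U l h" by blast
    have \<tau>: "\<tau> permutes U" unfolding h(2) conjg_def
      using permutes_bij_inv_into[OF Hp[rule_format, OF h(1)] lb] .
    have "restrict (\<tau> \<circ> l) ?N = l \<circ> h" using key[OF \<tau>] Hp h by blast
    hence "act n \<tau> (coset l (cyc c)) = coset l (cyc c)"
      using act_coset[OF le Hp, of \<tau>] coset_eq_iff[OF finite_atLeastAtMost assms(2), of "restrict (\<tau> \<circ> l) ?N" l] h(1)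
      by auto
    thus "\<tau> \<in> Aut n U (coset l (cyc c))" unfolding Aut_def using \<tau> by simp
  qed
qed

lemma mp_inj:
  assumes "bij_betw h U V"
  shows "inj_on (map_permutation U h) {\<pi>. \<pi> permutes U}"
proof (rule inj_onI)
  fix p q assume p: "p \<in> {\<pi>. \<pi> permutes U}" and q: "q \<in> {\<pi>. \<pi> permutes U}"
    and e: "map_permutation U h p = map_permutation U h q"
  have inv: "\<And>x. x \<in> U \<Longrightarrow> inv_into U h (h x) = x"
    using assms by (simp add: bij_betw_def inv_into_f_f)
  have "p = map_permutation V (inv_into U h) (map_permutation U h p)"
    using map_permutation_compose_inv[OF assms _ inv] p by simp
  also have "\<dots> = map_permutation V (inv_into U h) (map_permutation U h q)" using e by simp
  also have "\<dots> = q" using map_permutation_compose_inv[OF assms _ inv] q by simp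
  finally show "p = q" .
qed

lemma Cspec_elem:
  assumes "s \<in> Cspec \<alpha> U" "\<alpha> \<in> partitions n"
  shows "\<exists>l\<in>bijs n U. s = coset l (cyc (sigma \<alpha>))"
  using assms unfolding Cspec_def Xquot_def partitions_def cgroup_cyc by auto

lemma transport:
  fixes U :: "'a set" and V :: "'b set"
  assumes "s \<in> Cspec \<alpha> U" "\<alpha> \<in> partitions n" "bij_betw h U V"
  shows "act n h s \<in> Cspec \<alpha> V"
    "Aut n V (act n h s) = map_permutation U h ` Aut n U s"
proof -
  let ?N = "{1..n::nat}" and ?H = "cyc (sigma \<alpha>)"
  obtain l where l: "l \<in> bijs n U" "s = coset l ?H" using Cspec_elem[OF assms(1,2)] by blast
  have lb: "bij_betw l ?N U" and le: "l \<in> extensional ?N" using l(1) unfolding bijs_def by auto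
  have sp: "sigma \<alpha> permutes ?N" using sigma_props(1)[OF assms(2)] .
  have Hp: "\<forall>g\<in>?H. g permutes ?N" using cyc_perm[OF sp] by blast
  define l' where "l' = restrict (h \<circ> l) ?N"
  have l'b: "bij_betw l' ?N V" unfolding l'_def
    using bij_betw_trans[OF lb assms(3)] by (rule bij_betw_cong[THEN iffD1, rotated]) simp
  have l': "l' \<in> bijs n V" unfolding bijs_def using l'b by (simp add: l'_def)
  have act: "act n h s = coset l' ?H" unfolding l(2) l'_def using act_coset[OF le Hp] .
  have sum: "sum_mset \<alpha> = n" using assms(2) unfolding partitions_def by simp
  show "act n h s \<in> Cspec \<alpha> V" unfolding act Cspec_def Xquot_def sum cgroup_cyc using l' by blast
  have injh: "inj_on h U" using assms(3) by (simp add: bij_betw_def)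
  have "Aut n V (act n h s) = conjg n V l' ` ?H" unfolding act using Aut_coset[OF l' sp] .
  also have "\<dots> = map_permutation ?N l' ` ?H" using conjg_mp[OF l'b] by simp
  also have "\<dots> = map_permutation ?N (h \<circ> l) ` ?H"
  proof (intro image_cong refl)
    fix g assume "g \<in> ?H"
    show "map_permutation ?N l' g = map_permutation ?N (h \<circ> l) g"
      using l'b Hp \<open>g \<in> ?H\<close> by (intro map_permutation_cong) (auto simp: l'_def bij_betw_def)
  qed
  also have "\<dots> = map_permutation U h ` map_permutation ?N l ` ?H"
    unfolding image_image using map_permutation_compose[OF lb injh] by simp
  also have "map_permutation ?N l ` ?H = Aut n U s"
    unfolding l(2) Aut_coset[OF l(1) sp] conjg_mp[OF lb] ..
  finally show "Aut n V (act n h s) = map_permutation U h ` Aut n U s" .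
qed

lemma Aut_perm: "Aut n U s \<subseteq> {\<pi>. \<pi> permutes U}" unfolding Aut_def by auto

lemma conj1:
  fixes U :: "'a set" and V :: "'b set"
  assumes "\<alpha> \<in> partitions n" "\<beta> \<in> partitions n" "bij_betw h U V"
  shows "Cmu \<alpha> \<beta> \<mu> U \<subseteq> Cspec \<alpha> U \<times> Cspec \<beta> U \<and>
         (\<forall>(s, t) \<in> Cmu \<alpha> \<beta> \<mu> U. (act n h s, act n h t) \<in> Cmu \<alpha> \<beta> \<mu> V)"
proof
  show "Cmu \<alpha> \<beta> \<mu> U \<subseteq> Cspec \<alpha> U \<times> Cspec \<beta> U" unfolding Cmu_def by auto
  have sum: "sum_mset \<alpha> = n" using assms(1) unfolding partitions_def by simp
  show "\<forall>(s, t) \<in> Cmu \<alpha> \<beta> \<mu> U. (act n h s, act n h t) \<in> Cmu \<alpha> \<beta> \<mu> V"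
  proof (clarify)
    fix s t assume "(s, t) \<in> Cmu \<alpha> \<beta> \<mu> U"
    hence s: "s \<in> Cspec \<alpha> U" and t: "t \<in> Cspec \<beta> U"
      and iso: "iso_sub n U (Aut n U s \<inter> Aut n U t) (cgroup \<mu>)"
      unfolding Cmu_def sum by auto
    let ?T = "map_permutation U h"
    have "Aut n V (act n h s) \<inter> Aut n V (act n h t) = ?T ` Aut n U s \<inter> ?T ` Aut n U t"
      using transport(2)[OF s assms(1,3)] transport(2)[OF t assms(2,3)] by simp
    also have "\<dots> = ?T ` (Aut n U s \<inter> Aut n U t)"
    proof (rule inj_on_image_Int[symmetric])
      show "inj_on ?T {\<pi>. \<pi> permutes U}" using mp_inj[OF assms(3)] .
    qed (use Aut_perm in auto)
    finally have e: "Aut n V (act n h s) \<inter> Aut n V (act n h t) = ?T ` (Aut n U s \<inter> Aut n U t)" .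
    obtain f where f: "bij_betw f {1..n} U" "Aut n U s \<inter> Aut n U t = conjg n U f ` cgroup \<mu>"
      using iso unfolding iso_sub_def by blast
    have injh: "inj_on h U" using assms(3) by (simp add: bij_betw_def)
    have hf: "bij_betw (h \<circ> f) {1..n} V" using bij_betw_trans[OF f(1) assms(3)] .
    have "?T ` (Aut n U s \<inter> Aut n U t) = conjg n V (h \<circ> f) ` cgroup \<mu>"
      unfolding f(2) conjg_mp[OF f(1)] conjg_mp[OF hf] image_image
      using map_permutation_compose[OF f(1) injh] by simp
    hence "iso_sub n V (Aut n V (act n h s) \<inter> Aut n V (act n h t)) (cgroup \<mu>)"
      unfolding iso_sub_def e using hf by blast
    thus "(act n h s, act n h t) \<in> Cmu \<alpha> \<beta> \<mu> V"
      unfolding Cmu_def sum using transport(1)[OF s assms(1,3)] transport(1)[OF t assms(2,3)]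
      by simp
  qed
qed

lemma perm_bij: "g permutes {1..n} \<Longrightarrow> bij_betw g {1..n::nat} {1..n}"
  by (rule permutes_imp_bij)

lemma ct_partition:
  assumes "g permutes {1..n}"
  shows "ct {1..n} g \<in> partitions n"
proof -
  let ?N = "{1..n::nat}" and ?O = "porbit g ` {1..n}"
  have b: "bij_betw g ?N ?N" using perm_bij[OF assms] .
  have "sum_mset (ct ?N g) = sum card ?O" unfolding ct_def by (simp add: sum_unfold_sum_mset)
  also have "\<dots> = card (\<Union> ?O)"
  proof (rule card_Union_disjoint[symmetric])
    show "disjoint ?O" unfolding disjoint_def
    proof (intro ballI impI)
      fix P Q assume "P \<in> ?O" "Q \<in> ?O" "P \<noteq> Q"
      then obtain x y where "x \<in> ?N" "y \<in> ?N" "P = porbit g x" "Q = porbit g y" by blast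
      thus "P \<inter> Q = {}" using porbit_disjoint[OF finite_atLeastAtMost b, of x y] \<open>P \<noteq> Q\<close> by simp
    qed
    show "\<And>Q. Q \<in> ?O \<Longrightarrow> finite Q" using finite_porbit[OF finite_atLeastAtMost b] by auto
  qed
  also have "\<Union> ?O = ?N" using porbit_subset[OF b] porbit_self by blast
  finally have s: "sum_mset (ct ?N g) = n" by simp
  have "0 \<notin># ct ?N g"
  proof
    assume "0 \<in># ct ?N g"
    then obtain x where "x \<in> ?N" "card (porbit g x) = 0" unfolding ct_def by auto
    thus False using finite_porbit[OF finite_atLeastAtMost b, of x] porbit_self[of x g] by auto
  qed
  thus ?thesis using s unfolding partitions_def by simp
qed

lemma size_ct: "size (ct A g) = card (porbit g ` A)"
  unfolding ct_def by simp

lemma tri: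
  assumes "c permutes {1..n}" "g \<in> cyc c"
  shows "size (ct {1..n} c) \<le> size (ct {1..n} g)"
    "size (ct {1..n} c) = size (ct {1..n} g) \<Longrightarrow> ct {1..n} g = ct {1..n} c"
proof -
  let ?N = "{1..n::nat}"
  have bc: "bij_betw c ?N ?N" using perm_bij[OF assms(1)] .
  have gp: "g permutes ?N" using cyc_perm[OF assms] .
  have bg: "bij_betw g ?N ?N" using perm_bij[OF gp] .
  obtain k where k: "g = c ^^ k" using assms(2) unfolding cyc_def by auto
  have sub: "porbit g x \<subseteq> porbit c x" for x
  proof
    fix y assume "y \<in> porbit g x"
    then obtain j where "y = ((c ^^ k) ^^ j) x" unfolding porbit_def k by auto
    hence "y = (c ^^ (k * j)) x" by (simp add: funpow_mult)
    thus "y \<in> porbit c x" unfolding porbit_def by blast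
  qed
  define F where "F Q = \<Union> (porbit c ` Q)" for Q
  have F: "x \<in> ?N \<Longrightarrow> F (porbit g x) = porbit c x" for x
  proof -
    assume x: "x \<in> ?N"
    have "\<And>y. y \<in> porbit g x \<Longrightarrow> porbit c y = porbit c x"
      using sub porbit_eq[OF finite_atLeastAtMost bc x] by blast
    thus ?thesis unfolding F_def using porbit_self[of x g] by blast
  qed
  have img: "porbit c ` ?N = F ` (porbit g ` ?N)"
    unfolding image_image using F by auto
  have fin: "finite (porbit g ` ?N)" by simp
  show "size (ct ?N c) \<le> size (ct ?N g)" unfolding size_ct img using card_image_le[OF fin] .
  assume eq: "size (ct ?N c) = size (ct ?N g)"
  hence "card (F ` (porbit g ` ?N)) = card (porbit g ` ?N)" unfolding size_ct img .
  hence inj: "inj_on F (porbit g ` ?N)" using eq_card_imp_inj_on[OF fin] by blast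
  have same: "porbit g x = porbit c x" if x: "x \<in> ?N" for x
  proof
    show "porbit g x \<subseteq> porbit c x" using sub .
    show "porbit c x \<subseteq> porbit g x"
    proof
      fix y assume y: "y \<in> porbit c x"
      have yN: "y \<in> ?N" using porbit_subset[OF bc x] y by blast
      have "F (porbit g y) = F (porbit g x)" using F[OF yN] F[OF x] porbit_eq[OF finite_atLeastAtMost bc x y] by simp
      hence "porbit g y = porbit g x" using inj yN x by (auto dest: inj_onD)
      thus "y \<in> porbit g x" using porbit_self[of y g] by simp
    qed
  qed
  have "porbit g ` ?N = porbit c ` ?N" using same by auto
  thus "ct ?N g = ct ?N c" unfolding ct_def by simp
qed

lemma conjg_perm:
  assumes "bij_betw f {1..n} U" "g permutes {1..n}"
  shows "conjg n U f g permutes U"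
  unfolding conjg_def using permutes_bij_inv_into[OF assms(2,1)] .

lemma ct_conjg:
  assumes "bij_betw f {1..n} {1..n}" "g permutes {1..n}"
  shows "ct {1..n} (conjg n {1..n} f g) = ct {1..n} g"
proof -
  let ?N = "{1..n::nat}" and ?s = "conjg n {1..n} f g"
  have sp: "?s permutes ?N" using conjg_perm[OF assms] .
  define f' where "f' x = (if x \<in> ?N then f x else x)" for x
  have "f' \<in> Conj ?N ?N g ?s"
    unfolding Conj_def
  proof (intro CollectI conjI allI ballI impI)
    show "bij_betw f' ?N ?N" using assms(1) by (rule bij_betw_cong[THEN iffD1, rotated]) (simp add: f'_def)
    fix x assume x: "x \<in> ?N"
    have fx: "f x \<in> ?N" using assms(1) x by (auto simp: bij_betw_def)
    have gx: "g x \<in> ?N" using permutes_in_image[OF assms(2)] x by simp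
    have "inv_into ?N f (f x) = x" using assms(1) x by (simp add: bij_betw_def inv_into_f_f)
    thus "f' (g x) = ?s (f' x)" using x fx gx unfolding f'_def conjg_def by simp
  qed (auto simp: f'_def)
  hence "card (Conj ?N ?N g ?s) \<noteq> 0" using finite_Conj[of ?N ?N g ?s] by auto
  thus ?thesis using count_conj[OF finite_atLeastAtMost perm_bij[OF assms(2)] finite_atLeastAtMost perm_bij[OF sp]]
    by (auto split: if_splits)
qed

lemma orbit_fix_count:
  fixes a :: "(nat \<Rightarrow> nat) \<Rightarrow> 'x \<Rightarrow> 'x"
  assumes comp: "\<And>\<pi> \<rho> y. a \<pi> (a \<rho> y) = a (\<pi> \<circ> \<rho>) y"
    and idx: "a id x = x" and \<sigma>: "\<sigma> permutes N" and fin: "finite N"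
  shows "card {y \<in> {a \<pi> x | \<pi>. \<pi> permutes N}. a \<sigma> y = y} * card {\<pi>. \<pi> permutes N \<and> a \<pi> x = x}
       = card {\<pi>. \<pi> permutes N \<and> a (inv \<pi> \<circ> \<sigma> \<circ> \<pi>) x = x}"
proof -
  let ?S = "{\<pi>. \<pi> permutes N}"
  let ?P = "{\<pi>. \<pi> permutes N \<and> a \<sigma> (a \<pi> x) = a \<pi> x}"
  let ?Fix = "{y \<in> {a \<pi> x | \<pi>. \<pi> permutes N}. a \<sigma> y = y}"
  let ?Stab = "{\<pi>. \<pi> permutes N \<and> a \<pi> x = x}"
  have finS: "finite ?S" using finite_permutations[OF fin] .
  have finP: "finite ?P" using finS by (rule finite_subset[rotated]) auto
  have invl: "a (inv \<pi>) (a \<pi> y) = y" if "\<pi> permutes N" "a id y = y" for \<pi> y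
    using comp[of "inv \<pi>" \<pi> y] permutes_inv_o(2)[OF that(1)] that(2) by simp
  have Peq: "?P = {\<pi>. \<pi> permutes N \<and> a (inv \<pi> \<circ> \<sigma> \<circ> \<pi>) x = x}"
  proof (intro Collect_cong conj_cong refl)
    fix \<pi> assume \<pi>: "\<pi> permutes N"
    show "a \<sigma> (a \<pi> x) = a \<pi> x \<longleftrightarrow> a (inv \<pi> \<circ> \<sigma> \<circ> \<pi>) x = x"
    proof
      assume e: "a \<sigma> (a \<pi> x) = a \<pi> x"
      have "a (inv \<pi> \<circ> \<sigma> \<circ> \<pi>) x = a (inv \<pi>) (a \<sigma> (a \<pi> x))" by (simp add: comp o_assoc)
      also have "\<dots> = a (inv \<pi>) (a \<pi> x)" using e by simp
      also have "\<dots> = x" using invl[OF \<pi> idx] .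
      finally show "a (inv \<pi> \<circ> \<sigma> \<circ> \<pi>) x = x" .
    next
      assume e: "a (inv \<pi> \<circ> \<sigma> \<circ> \<pi>) x = x"
      have "a \<sigma> (a \<pi> x) = a (\<pi> \<circ> inv \<pi> \<circ> \<sigma> \<circ> \<pi>) x"
        using permutes_inv_o(1)[OF \<pi>] by (simp add: comp o_assoc)
      also have "\<dots> = a \<pi> (a (inv \<pi> \<circ> \<sigma> \<circ> \<pi>) x)" by (simp add: comp o_assoc)
      also have "\<dots> = a \<pi> x" using e by simp
      finally show "a \<sigma> (a \<pi> x) = a \<pi> x" .
    qed
  qed
  have img: "(\<lambda>\<pi>. a \<pi> x) ` ?P = ?Fix" by auto
  have fib: "card {\<pi> \<in> ?P. a \<pi> x = y} = card ?Stab" if y: "y \<in> ?Fix" for y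
  proof -
    obtain \<pi>0 where \<pi>0: "\<pi>0 permutes N" "y = a \<pi>0 x" and fy: "a \<sigma> y = y" using y by auto
    have "{\<pi> \<in> ?P. a \<pi> x = y} = (\<lambda>\<tau>. \<pi>0 \<circ> \<tau>) ` ?Stab"
    proof (intro equalityI subsetI)
      fix \<pi> assume "\<pi> \<in> {\<pi> \<in> ?P. a \<pi> x = y}"
      hence \<pi>: "\<pi> permutes N" "a \<pi> x = y" by auto
      let ?\<tau> = "inv \<pi>0 \<circ> \<pi>"
      have "?\<tau> permutes N" using \<pi>(1) permutes_inv[OF \<pi>0(1)] by (rule permutes_compose)
      moreover have "a ?\<tau> x = x"
        using comp[of "inv \<pi>0" \<pi> x, symmetric] \<pi>(2) \<pi>0(2) invl[OF \<pi>0(1) idx] by simp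
      moreover have "\<pi>0 \<circ> ?\<tau> = \<pi>" using permutes_inv_o(1)[OF \<pi>0(1)] by (simp add: o_assoc)
      ultimately show "\<pi> \<in> (\<lambda>\<tau>. \<pi>0 \<circ> \<tau>) ` ?Stab"
        by (intro image_eqI[of _ _ ?\<tau>]) auto
    next
      fix \<pi> assume "\<pi> \<in> (\<lambda>\<tau>. \<pi>0 \<circ> \<tau>) ` ?Stab"
      then obtain \<tau> where \<tau>: "\<tau> permutes N" "a \<tau> x = x" "\<pi> = \<pi>0 \<circ> \<tau>" by auto
      have "\<pi> permutes N" using \<tau>(1) \<pi>0(1) \<tau>(3) by (simp add: permutes_compose)
      moreover have "a \<pi> x = y" using \<tau> \<pi>0 comp[of \<pi>0 \<tau> x] by simp
      ultimately show "\<pi> \<in> {\<pi> \<in> ?P. a \<pi> x = y}" using fy by simp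
    qed
    moreover have "inj_on (\<lambda>\<tau>. \<pi>0 \<circ> \<tau>) ?Stab"
    proof (rule inj_onI)
      fix \<tau>1 \<tau>2 assume "\<pi>0 \<circ> \<tau>1 = \<pi>0 \<circ> \<tau>2"
      hence "inv \<pi>0 \<circ> (\<pi>0 \<circ> \<tau>1) = inv \<pi>0 \<circ> (\<pi>0 \<circ> \<tau>2)" by simp
      thus "\<tau>1 = \<tau>2" unfolding o_assoc permutes_inv_o(2)[OF \<pi>0(1)] by simp
    qed
    ultimately show ?thesis by (simp add: card_image)
  qed
  have "card ?P = (\<Sum>\<pi>\<in>?P. 1)" by simp
  also have "\<dots> = (\<Sum>y\<in>(\<lambda>\<pi>. a \<pi> x) ` ?P. \<Sum>\<pi>\<in>{\<pi> \<in> ?P. a \<pi> x = y}. 1)"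
    by (rule sum.image_gen[OF finP])
  also have "\<dots> = (\<Sum>y\<in>(\<lambda>\<pi>. a \<pi> x) ` ?P. card {\<pi> \<in> ?P. a \<pi> x = y})" by simp
  also have "\<dots> = (\<Sum>y\<in>?Fix. card ?Stab)" unfolding img using fib by (rule sum.cong[OF refl])
  also have "\<dots> = card ?Fix * card ?Stab" by simp
  finally show ?thesis using Peq by simp
qed

lemma conj_class_count:
  assumes "L \<subseteq> {\<pi>. \<pi> permutes {1..n}}" "\<sigma> permutes {1..n}"
  shows "card {\<pi>. \<pi> permutes {1..n} \<and> inv \<pi> \<circ> \<sigma> \<circ> \<pi> \<in> L}
       = zee (ct {1..n} \<sigma>) * card {g \<in> L. ct {1..n} g = ct {1..n} \<sigma>}"
proof -
  let ?N = "{1..n::nat}"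
  let ?Q = "{\<pi>. \<pi> permutes ?N \<and> inv \<pi> \<circ> \<sigma> \<circ> \<pi> \<in> L}"
  let ?F = "\<lambda>\<pi>. inv \<pi> \<circ> \<sigma> \<circ> \<pi>"
  have finS: "finite {\<pi>. \<pi> permutes ?N}" using finite_permutations[OF finite_atLeastAtMost] .
  have finQ: "finite ?Q" using finS by (rule finite_subset[rotated]) auto
  have finL: "finite L" using finS assms(1) by (rule finite_subset[rotated])
  have fib: "{\<pi> \<in> ?Q. ?F \<pi> = g} = Conj ?N ?N g \<sigma>" if g: "g \<in> L" for g
  proof (intro equalityI subsetI)
    fix \<pi> assume "\<pi> \<in> {\<pi> \<in> ?Q. ?F \<pi> = g}"
    hence \<pi>: "\<pi> permutes ?N" and e: "?F \<pi> = g" by auto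
    have "\<pi> (g x) = \<sigma> (\<pi> x)" for x
    proof -
      have "\<pi> (g x) = (\<pi> \<circ> inv \<pi>) (\<sigma> (\<pi> x))" unfolding e[symmetric] by simp
      thus ?thesis using permutes_inv_o(1)[OF \<pi>] by simp
    qed
    thus "\<pi> \<in> Conj ?N ?N g \<sigma>" unfolding Conj_def
      using permutes_imp_bij[OF \<pi>] permutes_not_in[OF \<pi>] by auto
  next
    fix \<pi> assume "\<pi> \<in> Conj ?N ?N g \<sigma>"
    hence b: "bij_betw \<pi> ?N ?N" and c: "\<forall>x\<in>?N. \<pi> (g x) = \<sigma> (\<pi> x)"
      and o: "\<forall>x. x \<notin> ?N \<longrightarrow> \<pi> x = x" unfolding Conj_def by auto
    have \<pi>: "\<pi> permutes ?N" using b o by (auto intro: bij_imp_permutes)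
    have gp: "g permutes ?N" using g assms(1) by auto
    have "?F \<pi> = g"
    proof
      fix x show "?F \<pi> x = g x"
      proof (cases "x \<in> ?N")
        case True
        have "?F \<pi> x = inv \<pi> (\<pi> (g x))" using c True by simp
        also have "\<dots> = g x" using permutes_inv_o(2)[OF \<pi>] by (simp add: fun_eq_iff)
        finally show ?thesis .
      next
        case False
        have "inv \<pi> x = x" using permutes_inv[OF \<pi>] False by (simp add: permutes_not_in)
        thus ?thesis using False o assms(2) gp by (simp add: permutes_not_in)
      qed
    qed
    thus "\<pi> \<in> {\<pi> \<in> ?Q. ?F \<pi> = g}" using \<pi> g by simp
  qed
  have "?F ` ?Q \<subseteq> L" by auto
  have "card ?Q = (\<Sum>\<pi>\<in>?Q. 1)" by simp
  also have "\<dots> = (\<Sum>g\<in>L. \<Sum>\<pi>\<in>{\<pi> \<in> ?Q. ?F \<pi> = g}. 1)"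
    by (rule sum.group[OF finQ finL \<open>?F ` ?Q \<subseteq> L\<close>, symmetric])
  also have "\<dots> = (\<Sum>g\<in>L. card {\<pi> \<in> ?Q. ?F \<pi> = g})" by simp
  also have "\<dots> = (\<Sum>g\<in>L. if ct ?N g = ct ?N \<sigma> then zee (ct ?N \<sigma>) else 0)"
  proof (rule sum.cong[OF refl])
    fix g assume g: "g \<in> L"
    have gp: "g permutes ?N" using g assms(1) by auto
    show "card {\<pi> \<in> ?Q. ?F \<pi> = g} = (if ct ?N g = ct ?N \<sigma> then zee (ct ?N \<sigma>) else 0)"
      unfolding fib[OF g] using count_conj[OF finite_atLeastAtMost perm_bij[OF gp]
        finite_atLeastAtMost perm_bij[OF assms(2)]] by simp
  qed
  also have "\<dots> = (\<Sum>g\<in>{g \<in> L. ct ?N g = ct ?N \<sigma>}. zee (ct ?N \<sigma>))"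
    by (rule sum.inter_filter[OF finL, symmetric])
  also have "\<dots> = zee (ct ?N \<sigma>) * card {g \<in> L. ct ?N g = ct ?N \<sigma>}" by simp
  finally show ?thesis .
qed

lemma fix_stab:
  fixes a :: "(nat \<Rightarrow> nat) \<Rightarrow> 'x \<Rightarrow> 'x"
  assumes comp: "\<And>\<pi> \<rho> y. a \<pi> (a \<rho> y) = a (\<pi> \<circ> \<rho>) y"
    and idx: "a id x = x" and \<sigma>: "\<sigma> permutes {1..n}"
  shows "card {y \<in> {a \<pi> x | \<pi>. \<pi> permutes {1..n}}. a \<sigma> y = y} * card {\<pi>. \<pi> permutes {1..n} \<and> a \<pi> x = x}
       = zee (ct {1..n} \<sigma>) * card {g \<in> {\<pi>. \<pi> permutes {1..n} \<and> a \<pi> x = x}. ct {1..n} g = ct {1..n} \<sigma>}"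
proof -
  let ?N = "{1..n::nat}"
  let ?Stab = "{\<pi>. \<pi> permutes ?N \<and> a \<pi> x = x}"
  have "{\<pi>. \<pi> permutes ?N \<and> a (inv \<pi> \<circ> \<sigma> \<circ> \<pi>) x = x} = {\<pi>. \<pi> permutes ?N \<and> inv \<pi> \<circ> \<sigma> \<circ> \<pi> \<in> ?Stab}"
  proof (intro Collect_cong conj_cong refl)
    fix \<pi> assume \<pi>: "\<pi> permutes ?N"
    have "inv \<pi> \<circ> \<sigma> \<circ> \<pi> permutes ?N"
      by (intro permutes_compose permutes_inv \<pi> \<sigma>)
    thus "(a (inv \<pi> \<circ> \<sigma> \<circ> \<pi>) x = x) = (inv \<pi> \<circ> \<sigma> \<circ> \<pi> \<in> ?Stab)" by simp
  qed
  thus ?thesis using orbit_fix_count[of a x \<sigma> ?N, OF comp idx \<sigma> finite_atLeastAtMost]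
      conj_class_count[of ?Stab n \<sigma>] \<sigma> by auto
qed

lemma zee_pos: "0 \<notin># M \<Longrightarrow> zee M > 0"
  unfolding zee_def by (rule prod_pos) (auto intro: gr0I)

lemma mem_le_sum_mset: "(x::nat) \<in># M \<Longrightarrow> x \<le> sum_mset M"
  by (metis le_add1 multi_member_split sum_mset.add_mset)

lemma size_le_sum_mset: "0 \<notin># M \<Longrightarrow> size M \<le> sum_mset (M :: nat multiset)"
proof (induction M)
  case (add x M)
  hence "x \<ge> 1" by (auto intro: gr0I)
  thus ?case using add by simp
qed simp

lemma finite_partitions: "finite (partitions n)"
proof -
  have "partitions n \<subseteq> mset ` {xs. set xs \<subseteq> {0..n} \<and> length xs \<le> n}"
  proof
    fix \<mu> assume m: "\<mu> \<in> partitions n"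
    let ?xs = "sorted_list_of_multiset \<mu>"
    have "set ?xs \<subseteq> {0..n}"
    proof
      fix x assume "x \<in> set ?xs"
      hence "x \<in># \<mu>" by simp
      thus "x \<in> {0..n}" using m mem_le_sum_mset[of x \<mu>] unfolding partitions_def by simp
    qed
    moreover have "length ?xs \<le> n"
    proof -
      have "length ?xs = size (mset ?xs)" by (simp only: size_mset)
      also have "mset ?xs = \<mu>" by simp
      finally show ?thesis using m size_le_sum_mset[of \<mu>] unfolding partitions_def by simp
    qed
    ultimately show "\<mu> \<in> mset ` {xs. set xs \<subseteq> {0..n} \<and> length xs \<le> n}"
      by (intro image_eqI[of _ _ ?xs]) auto
  qed
  thus ?thesis by (rule finite_subset) (intro finite_imageI finite_lists_length_le; simp)
qed

lemma sum_part: "\<mu> \<in> partitions n \<Longrightarrow> sum_mset \<mu> = n" unfolding partitions_def by simp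

lemma sigma_perm: "\<mu> \<in> partitions n \<Longrightarrow> sigma \<mu> permutes {1..n}"
  using sigma_props(1) .

lemma sigma_ct: "\<mu> \<in> partitions n \<Longrightarrow> ct {1..n} (sigma \<mu>) = \<mu>"
  using sigma_props(2)[of \<mu> n] unfolding cycle_type_def ct_def .

lemma Cser_eq:
  assumes "\<mu> \<in> partitions n"
  shows "Cser \<mu> \<nu> = of_nat (card {g \<in> cyc (sigma \<mu>). ct {1..n} g = \<nu>}) / of_nat (card (cyc (sigma \<mu>)))"
  unfolding Cser_def cgroup_cyc sum_part[OF assms] cycle_type_def ct_def ..

lemma card_cyc_pos:
  assumes "c permutes {1..n}"
  shows "card (cyc c) > 0"
  using finite_cyc[OF finite_atLeastAtMost assms] id_in_cyc[of c] by (auto simp: card_gt_0_iff)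

lemma act_id_Cspec:
  assumes "s \<in> Cspec \<alpha> U" "\<alpha> \<in> partitions n"
  shows "act n id s = s"
proof -
  obtain l where l: "l \<in> bijs n U" "s = coset l (cyc (sigma \<alpha>))" using Cspec_elem[OF assms] by blast
  have le: "l \<in> extensional {1..n}" using l(1) unfolding bijs_def by auto
  have "act n id s = coset (restrict (id \<circ> l) {1..n}) (cyc (sigma \<alpha>))"
    unfolding l(2) using act_coset[OF le] cyc_perm[OF sigma_perm[OF assms(2)]] by blast
  also have "restrict (id \<circ> l) {1..n} = l" using le by (auto simp: extensional_def fun_eq_iff)
  finally show ?thesis using l(2) by (simp add: id_def)
qed

lemma conjg_restrict_id:
  assumes "h permutes {1..n}"
  shows "conjg n {1..n} (restrict id {1..n}) h = h"
proof
  fix x show "conjg n {1..n} (restrict id {1..n}) h x = h x"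
  proof (cases "x \<in> {1..n}")
    case True
    have inj: "inj_on (restrict id {1..n}) {1..n}" by (auto simp: inj_on_def)
    have "inv_into {1..n} (restrict id {1..n}) (restrict id {1..n} x) = x"
      by (rule inv_into_f_f[OF inj True])
    hence "inv_into {1..n} (restrict id {1..n}) x = x" using True by simp
    thus ?thesis using True permutes_in_image[OF assms] unfolding conjg_def by simp
  next
    case False
    have "conjg n {1..n} (restrict id {1..n}) h x = x" unfolding conjg_def by (simp only: if_not_P[OF False])
    thus ?thesis using permutes_not_in[OF assms False] by simp
  qed
qed

lemma Cspec_orbit:
  assumes "\<alpha> \<in> partitions n"
  defines "x0 \<equiv> coset (restrict id {1..n}) (cyc (sigma \<alpha>))"
  shows "Cspec \<alpha> {1..n} = {act n \<pi> x0 | \<pi>. \<pi> permutes {1..n}}"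
    "{\<pi>. \<pi> permutes {1..n} \<and> act n \<pi> x0 = x0} = cyc (sigma \<alpha>)"
    "x0 \<in> Cspec \<alpha> {1..n}"
proof -
  let ?N = "{1..n::nat}" and ?H = "cyc (sigma \<alpha>)"
  have sp: "sigma \<alpha> permutes ?N" using sigma_perm[OF assms(1)] .
  have Hp: "\<forall>h\<in>?H. h permutes ?N" using cyc_perm[OF sp] by blast
  have idb: "restrict id ?N \<in> bijs n ?N" unfolding bijs_def
    by (auto simp: bij_betw_def inj_on_def)
  show x0: "x0 \<in> Cspec \<alpha> ?N" unfolding x0_def Cspec_def Xquot_def sum_part[OF assms(1)] cgroup_cyc
    using idb by blast
  show "Cspec \<alpha> ?N = {act n \<pi> x0 | \<pi>. \<pi> permutes ?N}"
  proof (intro equalityI subsetI)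
    fix s assume "s \<in> Cspec \<alpha> ?N"
    then obtain l where l: "l \<in> bijs n ?N" "s = coset l ?H" using Cspec_elem[OF _ assms(1)] by blast
    have lb: "bij_betw l ?N ?N" and le: "l \<in> extensional ?N" using l(1) unfolding bijs_def by auto
    define \<pi> where "\<pi> x = (if x \<in> ?N then l x else x)" for x
    have "bij_betw \<pi> ?N ?N" using lb by (rule bij_betw_cong[THEN iffD1, rotated]) (simp add: \<pi>_def)
    hence \<pi>: "\<pi> permutes ?N" by (rule bij_imp_permutes) (auto simp: \<pi>_def)
    have "act n \<pi> x0 = coset (restrict (\<pi> \<circ> restrict id ?N) ?N) ?H"
      unfolding x0_def by (rule act_coset[OF _ Hp]) simp
    also have "restrict (\<pi> \<circ> restrict id ?N) ?N = l"
      using le by (auto simp: fun_eq_iff \<pi>_def extensional_def)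
    finally show "s \<in> {act n \<pi> x0 | \<pi>. \<pi> permutes ?N}" using l(2) \<pi> by auto
  next
    fix s assume "s \<in> {act n \<pi> x0 | \<pi>. \<pi> permutes ?N}"
    then obtain \<pi> where \<pi>: "\<pi> permutes ?N" "s = act n \<pi> x0" by blast
    show "s \<in> Cspec \<alpha> ?N" unfolding \<pi>(2) using transport(1)[OF x0 assms(1) permutes_imp_bij[OF \<pi>(1)]] .
  qed
  have "{\<pi>. \<pi> permutes ?N \<and> act n \<pi> x0 = x0} = Aut n ?N x0" unfolding Aut_def ..
  also have "\<dots> = conjg n ?N (restrict id ?N) ` ?H" unfolding x0_def by (rule Aut_coset[OF idb sp])
  also have "\<dots> = ?H" using conjg_restrict_id Hp by (auto simp: image_iff)
  finally show "{\<pi>. \<pi> permutes ?N \<and> act n \<pi> x0 = x0} = ?H" .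
qed

lemma fix_alpha:
  assumes "\<alpha> \<in> partitions n" "\<sigma> permutes {1..n}"
  shows "card {s \<in> Cspec \<alpha> {1..n}. act n \<sigma> s = s} * card (cyc (sigma \<alpha>))
       = zee (ct {1..n} \<sigma>) * card {g \<in> cyc (sigma \<alpha>). ct {1..n} g = ct {1..n} \<sigma>}"
proof -
  define x0 where "x0 = coset (restrict id {1..n}) (cyc (sigma \<alpha>))"
  note o = Cspec_orbit[OF assms(1), folded x0_def]
  have "act n id x0 = x0" using act_id_Cspec[OF o(3) assms(1)] .
  from fix_stab[of "act n" x0 \<sigma>, OF act_comp this assms(2)]
  show ?thesis unfolding o(1)[symmetric] o(2) .
qed

lemma card_conjg_image:
  assumes "bij_betw f {1..n} {1..n}" "L \<subseteq> {\<pi>. \<pi> permutes {1..n}}"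
  shows "card (conjg n {1..n} f ` L) = card L"
    "card {g \<in> conjg n {1..n} f ` L. ct {1..n} g = \<nu>} = card {g \<in> L. ct {1..n} g = \<nu>}"
proof -
  let ?N = "{1..n::nat}"
  have inj: "inj_on (conjg n ?N f) L"
    using mp_inj[OF assms(1)] assms(2) conjg_mp[OF assms(1)] by (auto intro: inj_on_subset)
  show "card (conjg n ?N f ` L) = card L" using card_image[OF inj] .
  have "{g \<in> conjg n ?N f ` L. ct ?N g = \<nu>} = conjg n ?N f ` {g \<in> L. ct ?N g = \<nu>}"
    using ct_conjg[OF assms(1)] assms(2) by auto
  thus "card {g \<in> conjg n ?N f ` L. ct ?N g = \<nu>} = card {g \<in> L. ct ?N g = \<nu>}"
    using card_image[OF inj_on_subset[OF inj]] by auto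
qed

lemma iso_cyc:
  assumes "\<mu> \<in> partitions n" "iso_sub n {1..n} L (cgroup \<mu>)"
  shows "\<exists>c. c permutes {1..n} \<and> ct {1..n} c = \<mu> \<and> L = cyc c"
proof -
  obtain f where f: "bij_betw f {1..n} {1..n}" "L = conjg n {1..n} f ` cgroup \<mu>"
    using assms(2) unfolding iso_sub_def by blast
  have sp: "sigma \<mu> permutes {1..n}" using sigma_perm[OF assms(1)] .
  have inj: "inj_on f {1..n}" using f(1) by (simp add: bij_betw_def)
  have "L = cyc (map_permutation {1..n} f (sigma \<mu>))"
    unfolding f(2) cgroup_cyc conjg_mp[OF f(1)] using mp_cyc[OF inj sp] .
  moreover have "ct {1..n} (conjg n {1..n} f (sigma \<mu>)) = \<mu>"
    using ct_conjg[OF f(1) sp] sigma_ct[OF assms(1)] by simp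
  moreover have "conjg n {1..n} f (sigma \<mu>) permutes {1..n}" using conjg_perm[OF f(1) sp] .
  ultimately show ?thesis unfolding conjg_mp[OF f(1)] by blast
qed

lemma iso_unique:
  assumes "\<mu> \<in> partitions n" "\<mu>' \<in> partitions n"
    "iso_sub n {1..n} L (cgroup \<mu>)" "iso_sub n {1..n} L (cgroup \<mu>')"
  shows "\<mu> = \<mu>'"
proof -
  obtain c where c: "c permutes {1..n}" "ct {1..n} c = \<mu>" "L = cyc c" using iso_cyc[OF assms(1,3)] by blast
  obtain c' where c': "c' permutes {1..n}" "ct {1..n} c' = \<mu>'" "L = cyc c'" using iso_cyc[OF assms(2,4)] by blast
  have "c' \<in> cyc c" using c(3) c'(3) c_in_cyc[of c'] by simp
  have "c \<in> cyc c'" using c(3) c'(3) c_in_cyc[of c] by simp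
  have "size (ct {1..n} c) \<le> size (ct {1..n} c')" using tri(1)[OF c(1) \<open>c' \<in> cyc c\<close>] .
  moreover have "size (ct {1..n} c') \<le> size (ct {1..n} c)" using tri(1)[OF c'(1) \<open>c \<in> cyc c'\<close>] .
  ultimately have "ct {1..n} c' = ct {1..n} c" using tri(2)[OF c(1) \<open>c' \<in> cyc c\<close>] by simp
  thus ?thesis using c(2) c'(2) by simp
qed

lemma iso_exists:
  assumes "\<alpha> \<in> partitions n" "s \<in> Cspec \<alpha> {1..n}" "t \<in> Cspec \<beta> {1..n}" "\<beta> \<in> partitions n"
  shows "\<exists>\<mu>\<in>partitions n. iso_sub n {1..n} (Aut n {1..n} s \<inter> Aut n {1..n} t) (cgroup \<mu>)"
proof -
  let ?N = "{1..n::nat}"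
  let ?L = "Aut n ?N s \<inter> Aut n ?N t"
  obtain l where l: "l \<in> bijs n ?N" "s = coset l (cyc (sigma \<alpha>))" using Cspec_elem[OF assms(2,1)] by blast
  have lb: "bij_betw l ?N ?N" using l(1) unfolding bijs_def by auto
  have sp: "sigma \<alpha> permutes ?N" using sigma_perm[OF assms(1)] .
  have inj: "inj_on l ?N" using lb by (simp add: bij_betw_def)
  let ?c = "map_permutation ?N l (sigma \<alpha>)"
  have cp: "?c permutes ?N" using map_permutation_permutes[OF lb sp] .
  have "Aut n ?N s = cyc ?c"
    unfolding l(2) Aut_coset[OF l(1) sp] conjg_mp[OF lb] using mp_cyc[OF inj sp] .
  hence Lsub: "?L \<subseteq> cyc ?c" by blast
  have idL: "id \<in> ?L" unfolding Aut_def using act_id_Cspec[OF assms(2,1)] act_id_Cspec[OF assms(3,4)]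
    by simp
  have cl: "g \<circ> h \<in> ?L" if "g \<in> ?L" "h \<in> ?L" for g h
    using that unfolding Aut_def by (auto simp: act_comp[symmetric] intro: permutes_compose)
  obtain d where d: "d \<in> ?L" "?L = cyc d"
    using subgroup_cyclic[OF finite_atLeastAtMost cp Lsub idL cl] by blast
  have dp: "d permutes ?N" using d(1) unfolding Aut_def by auto
  define \<mu> where "\<mu> = ct ?N d"
  have \<mu>: "\<mu> \<in> partitions n" unfolding \<mu>_def using ct_partition[OF dp] .
  have smp: "sigma \<mu> permutes ?N" using sigma_perm[OF \<mu>] .
  have "card (Conj ?N ?N (sigma \<mu>) d) = zee \<mu>"
    using count_conj[OF finite_atLeastAtMost perm_bij[OF smp] finite_atLeastAtMost perm_bij[OF dp]]
      sigma_ct[OF \<mu>] unfolding \<mu>_def by simp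
  moreover have "zee \<mu> > 0" using \<mu> unfolding partitions_def by (auto intro: zee_pos)
  ultimately obtain f where f: "f \<in> Conj ?N ?N (sigma \<mu>) d" by (metis card.empty ex_in_conv less_irrefl)
  have fb: "bij_betw f ?N ?N" and fc: "\<forall>x\<in>?N. f (sigma \<mu> x) = d (f x)" using f unfolding Conj_def by auto
  have finj: "inj_on f ?N" using fb by (simp add: bij_betw_def)
  have "conjg n ?N f (sigma \<mu>) = d"
  proof
    fix y show "conjg n ?N f (sigma \<mu>) y = d y"
    proof (cases "y \<in> ?N")
      case True
      have "y \<in> f ` ?N" using fb True by (simp add: bij_betw_def)
      then obtain x where x: "x \<in> ?N" "y = f x" by blast
      have "inv_into ?N f y = x" using x finj by (simp add: inv_into_f_f)
      thus ?thesis using True x fc unfolding conjg_def by simp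
    next
      case False
      have "conjg n ?N f (sigma \<mu>) y = y" unfolding conjg_def by (simp only: if_not_P[OF False])
      thus ?thesis using permutes_not_in[OF dp False] by simp
    qed
  qed
  hence "conjg n ?N f ` cgroup \<mu> = cyc d"
    unfolding cgroup_cyc conjg_mp[OF fb] using mp_cyc[OF finj smp] by (simp add: conjg_mp[OF fb])
  hence "iso_sub n ?N ?L (cgroup \<mu>)" unfolding iso_sub_def d(2) using fb by blast
  thus ?thesis using \<mu> by blast
qed

definition ap :: "nat \<Rightarrow> (nat \<Rightarrow> nat) \<Rightarrow> (nat \<Rightarrow> nat) set \<times> (nat \<Rightarrow> nat) set
    \<Rightarrow> (nat \<Rightarrow> nat) set \<times> (nat \<Rightarrow> nat) set" where
  "ap n \<pi> y = (act n \<pi> (fst y), act n \<pi> (snd y))"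

definition orb :: "nat \<Rightarrow> (nat \<Rightarrow> nat) set \<times> (nat \<Rightarrow> nat) set
    \<Rightarrow> ((nat \<Rightarrow> nat) set \<times> (nat \<Rightarrow> nat) set) set" where
  "orb n = (\<lambda>(s, t). {(act n \<pi> s, act n \<pi> t) | \<pi>. \<pi> permutes {1..n}})"

lemma orb_ap: "orb n x = {ap n \<pi> x | \<pi>. \<pi> permutes {1..n}}"
  unfolding orb_def ap_def by (cases x) simp

lemma ap_comp: "ap n \<pi> (ap n \<rho> y) = ap n (\<pi> \<circ> \<rho>) y"
  unfolding ap_def by (simp add: act_comp)

lemma num_types_eq:
  assumes "\<alpha> \<in> partitions n"
  shows "num_types \<alpha> \<beta> \<mu> = card (orb n ` Cmu \<alpha> \<beta> \<mu> {1..n})"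
  unfolding num_types_def Let_def sum_part[OF assms] orb_def ..

context
  fixes n :: nat and \<alpha> \<beta> :: "nat multiset"
  assumes \<alpha>: "\<alpha> \<in> partitions n" and \<beta>: "\<beta> \<in> partitions n"
begin

abbreviation "NN \<equiv> {1..n::nat}"
abbreviation "XX \<equiv> Cspec \<alpha> NN \<times> Cspec \<beta> NN"

lemma ap_id: "x \<in> XX \<Longrightarrow> ap n id x = x"
proof -
  assume x: "x \<in> XX"
  obtain s t where st: "x = (s, t)" by (cases x)
  have "s \<in> Cspec \<alpha> NN" "t \<in> Cspec \<beta> NN" using x st by auto
  hence "act n id s = s" "act n id t = t" using act_id_Cspec[OF _ \<alpha>] act_id_Cspec[OF _ \<beta>] by blast+
  thus ?thesis unfolding ap_def st by simp
qed

lemma ap_X: "x \<in> XX \<Longrightarrow> \<pi> permutes NN \<Longrightarrow> ap n \<pi> x \<in> XX"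
proof -
  assume x: "x \<in> XX" and \<pi>: "\<pi> permutes NN"
  obtain s t where st: "x = (s, t)" by (cases x)
  have "s \<in> Cspec \<alpha> NN" "t \<in> Cspec \<beta> NN" using x st by auto
  hence "act n \<pi> s \<in> Cspec \<alpha> NN" "act n \<pi> t \<in> Cspec \<beta> NN"
    using transport(1)[OF _ \<alpha> permutes_imp_bij[OF \<pi>]] transport(1)[OF _ \<beta> permutes_imp_bij[OF \<pi>]] by blast+
  thus ?thesis unfolding ap_def st by simp
qed

lemma orb_sub: "x \<in> XX \<Longrightarrow> orb n x \<subseteq> XX"
proof
  fix y assume "x \<in> XX" "y \<in> orb n x"
  then obtain \<pi> where "\<pi> permutes NN" "y = ap n \<pi> x" unfolding orb_ap by blast
  thus "y \<in> XX" using ap_X[OF \<open>x \<in> XX\<close>] by simp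
qed

lemma orb_self: "x \<in> XX \<Longrightarrow> x \<in> orb n x"
  unfolding orb_ap using ap_id[of x] by (intro CollectI exI[of _ id]) auto

lemma orb_eq: "x \<in> XX \<Longrightarrow> y \<in> orb n x \<Longrightarrow> orb n y = orb n x"
proof -
  assume x: "x \<in> XX" and "y \<in> orb n x"
  then obtain \<pi>0 where \<pi>0: "\<pi>0 permutes NN" "y = ap n \<pi>0 x" unfolding orb_ap by blast
  show "orb n y = orb n x"
  proof (intro equalityI subsetI)
    fix z assume "z \<in> orb n y"
    then obtain \<pi> where "\<pi> permutes NN" "z = ap n \<pi> y" unfolding orb_ap by blast
    hence "z = ap n (\<pi> \<circ> \<pi>0) x" "\<pi> \<circ> \<pi>0 permutes NN"
      using \<pi>0 ap_comp by (auto intro: permutes_compose)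
    thus "z \<in> orb n x" unfolding orb_ap by blast
  next
    fix z assume "z \<in> orb n x"
    then obtain \<pi> where \<pi>: "\<pi> permutes NN" "z = ap n \<pi> x" unfolding orb_ap by blast
    have "ap n (\<pi> \<circ> inv \<pi>0) y = ap n (\<pi> \<circ> (inv \<pi>0 \<circ> \<pi>0)) x" unfolding \<pi>0(2) ap_comp o_assoc ..
    also have "\<dots> = z" using permutes_inv_o(2)[OF \<pi>0(1)] \<pi>(2) by simp
    finally have "z = ap n (\<pi> \<circ> inv \<pi>0) y" ..
    moreover have "\<pi> \<circ> inv \<pi>0 permutes NN" using permutes_inv[OF \<pi>0(1)] \<pi>(1) by (rule permutes_compose)
    ultimately show "z \<in> orb n y" unfolding orb_ap by blast
  qed
qed

lemma Cmu_sub: "Cmu \<alpha> \<beta> \<mu> NN \<subseteq> XX" unfolding Cmu_def by auto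

lemma Cmu_iso: "(s, t) \<in> Cmu \<alpha> \<beta> \<mu> NN \<Longrightarrow> iso_sub n NN (Aut n NN s \<inter> Aut n NN t) (cgroup \<mu>)"
  unfolding Cmu_def sum_part[OF \<alpha>] by auto

lemma Cmu_stable: "x \<in> Cmu \<alpha> \<beta> \<mu> NN \<Longrightarrow> \<pi> permutes NN \<Longrightarrow> ap n \<pi> x \<in> Cmu \<alpha> \<beta> \<mu> NN"
proof -
  assume x: "x \<in> Cmu \<alpha> \<beta> \<mu> NN" and \<pi>: "\<pi> permutes NN"
  obtain s t where st: "x = (s, t)" by (cases x)
  have "\<forall>(s, t) \<in> Cmu \<alpha> \<beta> \<mu> NN. (act n \<pi> s, act n \<pi> t) \<in> Cmu \<alpha> \<beta> \<mu> NN"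
    using conj1[OF \<alpha> \<beta> permutes_imp_bij[OF \<pi>]] by blast
  thus ?thesis using x unfolding st ap_def by auto
qed

lemma stab_eq: "{\<pi>. \<pi> permutes NN \<and> ap n \<pi> (s, t) = (s, t)} = Aut n NN s \<inter> Aut n NN t"
  unfolding Aut_def ap_def by auto

lemma finite_Cspec: "\<gamma> \<in> partitions n \<Longrightarrow> finite (Cspec \<gamma> NN)"
proof -
  assume g: "\<gamma> \<in> partitions n"
  have "finite {\<pi>. \<pi> permutes NN}" by (rule finite_permutations) simp
  thus ?thesis unfolding Cspec_orbit(1)[OF g] by (simp add: setcompr_eq_image)
qed

lemma finite_X: "finite XX" using finite_Cspec[OF \<alpha>] finite_Cspec[OF \<beta>] by simp

lemma orbit_piece:
  assumes x: "x \<in> Cmu \<alpha> \<beta> \<mu> NN" and \<mu>: "\<mu> \<in> partitions n" and \<sigma>: "\<sigma> permutes NN"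
  shows "of_nat (card {y \<in> orb n x. ap n \<sigma> y = y}) = (of_nat (zee (ct NN \<sigma>)) * Cser \<mu> (ct NN \<sigma>) :: rat)"
proof -
  obtain s t where st: "x = (s, t)" by (cases x)
  have xX: "x \<in> XX" using x Cmu_sub by blast
  let ?L = "Aut n NN s \<inter> Aut n NN t"
  have fs: "card {y \<in> orb n x. ap n \<sigma> y = y} * card ?L = zee (ct NN \<sigma>) * card {g \<in> ?L. ct NN g = ct NN \<sigma>}"
    using fix_stab[of "ap n" x \<sigma> n, OF ap_comp ap_id[OF xX] \<sigma>] unfolding orb_ap[symmetric] st stab_eq .
  obtain f where f: "bij_betw f NN NN" "?L = conjg n NN f ` cgroup \<mu>"
    using Cmu_iso[OF x[unfolded st]] unfolding iso_sub_def by blast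
  have Hp: "cgroup \<mu> \<subseteq> {\<pi>. \<pi> permutes NN}" unfolding cgroup_cyc using cyc_perm[OF sigma_perm[OF \<mu>]] by blast
  have c1: "card ?L = card (cyc (sigma \<mu>))"
    using card_conjg_image(1)[OF f(1) Hp] unfolding f(2) cgroup_cyc .
  have c2: "card {g \<in> ?L. ct NN g = ct NN \<sigma>} = card {g \<in> cyc (sigma \<mu>). ct NN g = ct NN \<sigma>}"
    using card_conjg_image(2)[OF f(1) Hp] unfolding f(2) cgroup_cyc .
  have pos: "card (cyc (sigma \<mu>)) > 0" using card_cyc_pos[OF sigma_perm[OF \<mu>]] .
  have natq: "card {y \<in> orb n x. ap n \<sigma> y = y} * card (cyc (sigma \<mu>))
      = zee (ct NN \<sigma>) * card {g \<in> cyc (sigma \<mu>). ct NN g = ct NN \<sigma>}"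
    using fs unfolding c1 c2 .
  have "(of_nat (card {y \<in> orb n x. ap n \<sigma> y = y}) :: rat) * of_nat (card (cyc (sigma \<mu>)))
      = of_nat (zee (ct NN \<sigma>)) * of_nat (card {g \<in> cyc (sigma \<mu>). ct NN g = ct NN \<sigma>})"
    unfolding of_nat_mult[symmetric] natq ..
  thus ?thesis unfolding Cser_eq[OF \<mu>] using pos by (simp add: field_simps)
qed

lemma fix_X:
  assumes \<sigma>: "\<sigma> permutes NN"
  shows "(of_nat (card {y \<in> XX. ap n \<sigma> y = y}) :: rat)
        = (\<Sum>\<mu>\<in>partitions n. of_nat (num_types \<alpha> \<beta> \<mu>) * (of_nat (zee (ct NN \<sigma>)) * Cser \<mu> (ct NN \<sigma>)))"
proof -
  let ?Fix = "{y \<in> XX. ap n \<sigma> y = y}"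
  let ?T = "orb n ` XX"
  let ?f = "\<lambda>Q. card {y \<in> Q. ap n \<sigma> y = y}"
  have finF: "finite ?Fix" using finite_X by simp
  have finT: "finite ?T" using finite_X by simp
  have "card ?Fix = (\<Sum>y\<in>?Fix. 1)" by simp
  also have "\<dots> = (\<Sum>Q\<in>?T. \<Sum>y\<in>{y \<in> ?Fix. orb n y = Q}. 1)"
    by (rule sum.group[OF finF finT, symmetric]) auto
  also have "\<dots> = (\<Sum>Q\<in>?T. ?f Q)"
  proof (rule sum.cong[OF refl])
    fix Q assume "Q \<in> ?T"
    then obtain x where x: "x \<in> XX" "Q = orb n x" by blast
    have "{y \<in> ?Fix. orb n y = Q} = {y \<in> Q. ap n \<sigma> y = y}"
      using x orb_sub[OF x(1)] orb_eq[OF x(1)] orb_self by blast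
    thus "(\<Sum>y\<in>{y \<in> ?Fix. orb n y = Q}. 1) = ?f Q" by simp
  qed
  also have "?T = (\<Union>\<mu>\<in>partitions n. orb n ` Cmu \<alpha> \<beta> \<mu> NN)"
  proof (intro equalityI subsetI)
    fix Q assume "Q \<in> ?T"
    then obtain s t where st: "(s, t) \<in> XX" "Q = orb n (s, t)" by force
    obtain \<mu> where "\<mu> \<in> partitions n" "iso_sub n NN (Aut n NN s \<inter> Aut n NN t) (cgroup \<mu>)"
      using iso_exists[OF \<alpha> _ _ \<beta>] st(1) by blast
    hence "(s, t) \<in> Cmu \<alpha> \<beta> \<mu> NN" "\<mu> \<in> partitions n"
      unfolding Cmu_def sum_part[OF \<alpha>] using st(1) by auto
    thus "Q \<in> (\<Union>\<mu>\<in>partitions n. orb n ` Cmu \<alpha> \<beta> \<mu> NN)" using st(2) by blast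
  next
    fix Q assume "Q \<in> (\<Union>\<mu>\<in>partitions n. orb n ` Cmu \<alpha> \<beta> \<mu> NN)"
    thus "Q \<in> ?T" using Cmu_sub by blast
  qed
  also have "(\<Sum>Q\<in>(\<Union>\<mu>\<in>partitions n. orb n ` Cmu \<alpha> \<beta> \<mu> NN). ?f Q)
      = (\<Sum>\<mu>\<in>partitions n. \<Sum>Q\<in>orb n ` Cmu \<alpha> \<beta> \<mu> NN. ?f Q)"
  proof (rule sum.UNION_disjoint)
    show "finite (partitions n)" by (rule finite_partitions)
    show "\<forall>\<mu>\<in>partitions n. finite (orb n ` Cmu \<alpha> \<beta> \<mu> NN)"
      using finite_X Cmu_sub by (meson finite_imageI finite_subset)
    show "\<forall>\<mu>\<in>partitions n. \<forall>\<mu>'\<in>partitions n. \<mu> \<noteq> \<mu>' \<longrightarrow>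
        orb n ` Cmu \<alpha> \<beta> \<mu> NN \<inter> orb n ` Cmu \<alpha> \<beta> \<mu>' NN = {}"
    proof (intro ballI impI)
      fix \<mu> \<mu>' assume m: "\<mu> \<in> partitions n" "\<mu>' \<in> partitions n" "\<mu> \<noteq> \<mu>'"
      show "orb n ` Cmu \<alpha> \<beta> \<mu> NN \<inter> orb n ` Cmu \<alpha> \<beta> \<mu>' NN = {}"
      proof (rule ccontr)
        assume "orb n ` Cmu \<alpha> \<beta> \<mu> NN \<inter> orb n ` Cmu \<alpha> \<beta> \<mu>' NN \<noteq> {}"
        then obtain x x' where xx: "x \<in> Cmu \<alpha> \<beta> \<mu> NN" "x' \<in> Cmu \<alpha> \<beta> \<mu>' NN" "orb n x = orb n x'"
          by blast
        have "x \<in> orb n x'" using xx(3) orb_self[of x] Cmu_sub xx(1) by blast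
        then obtain \<pi> where "\<pi> permutes NN" "x = ap n \<pi> x'" unfolding orb_ap by blast
        hence "x \<in> Cmu \<alpha> \<beta> \<mu>' NN" using Cmu_stable[OF xx(2)] by simp
        obtain s t where st: "x = (s, t)" by (cases x)
        have "iso_sub n NN (Aut n NN s \<inter> Aut n NN t) (cgroup \<mu>)"
          "iso_sub n NN (Aut n NN s \<inter> Aut n NN t) (cgroup \<mu>')"
          using Cmu_iso xx(1) \<open>x \<in> Cmu \<alpha> \<beta> \<mu>' NN\<close> unfolding st by auto
        thus False using iso_unique[OF m(1,2)] m(3) by blast
      qed
    qed
  qed
  finally have "card ?Fix = (\<Sum>\<mu>\<in>partitions n. \<Sum>Q\<in>orb n ` Cmu \<alpha> \<beta> \<mu> NN. ?f Q)" .
  hence "(of_nat (card ?Fix) :: rat) = (\<Sum>\<mu>\<in>partitions n. \<Sum>Q\<in>orb n ` Cmu \<alpha> \<beta> \<mu> NN. of_nat (?f Q))"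
    by simp
  also have "\<dots> = (\<Sum>\<mu>\<in>partitions n. of_nat (num_types \<alpha> \<beta> \<mu>) * (of_nat (zee (ct NN \<sigma>)) * Cser \<mu> (ct NN \<sigma>)))"
  proof (rule sum.cong[OF refl])
    fix \<mu> assume \<mu>: "\<mu> \<in> partitions n"
    have "(\<Sum>Q\<in>orb n ` Cmu \<alpha> \<beta> \<mu> NN. (of_nat (?f Q) :: rat))
        = (\<Sum>Q\<in>orb n ` Cmu \<alpha> \<beta> \<mu> NN. of_nat (zee (ct NN \<sigma>)) * Cser \<mu> (ct NN \<sigma>))"
    proof (rule sum.cong[OF refl])
      fix Q assume "Q \<in> orb n ` Cmu \<alpha> \<beta> \<mu> NN"
      then obtain x where "x \<in> Cmu \<alpha> \<beta> \<mu> NN" "Q = orb n x" by blast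
      thus "(of_nat (?f Q) :: rat) = of_nat (zee (ct NN \<sigma>)) * Cser \<mu> (ct NN \<sigma>)"
        using orbit_piece[OF _ \<mu> \<sigma>] by simp
    qed
    thus "(\<Sum>Q\<in>orb n ` Cmu \<alpha> \<beta> \<mu> NN. (of_nat (?f Q) :: rat))
        = of_nat (num_types \<alpha> \<beta> \<mu>) * (of_nat (zee (ct NN \<sigma>)) * Cser \<mu> (ct NN \<sigma>))"
      unfolding num_types_eq[OF \<alpha>] by simp
  qed
  finally show ?thesis .
qed

end

lemma Cser_zero:
  assumes "\<mu> \<in> partitions n" "\<not> (\<exists>\<sigma>. \<sigma> permutes {1..n} \<and> ct {1..n} \<sigma> = \<nu>)"
  shows "Cser \<mu> \<nu> = 0"
proof -
  have e: "{g \<in> cyc (sigma \<mu>). ct {1..n} g = \<nu>} = {}"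
    using assms(2) cyc_perm[OF sigma_perm[OF assms(1)]] by blast
  show ?thesis unfolding Cser_eq[OF assms(1)] e by simp
qed

lemma Cser_fix:
  assumes "\<alpha> \<in> partitions n" "\<sigma> permutes {1..n}"
  shows "Cser \<alpha> (ct {1..n} \<sigma>) = of_nat (card {s \<in> Cspec \<alpha> {1..n}. act n \<sigma> s = s}) / of_nat (zee (ct {1..n} \<sigma>))"
proof -
  have zp: "zee (ct {1..n} \<sigma>) > 0" using ct_partition[OF assms(2)] unfolding partitions_def
    by (auto intro: zee_pos)
  have cp: "card (cyc (sigma \<alpha>)) > 0" using card_cyc_pos[OF sigma_perm[OF assms(1)]] .
  have "(of_nat (card {s \<in> Cspec \<alpha> {1..n}. act n \<sigma> s = s}) :: rat) * of_nat (card (cyc (sigma \<alpha>)))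
      = of_nat (zee (ct {1..n} \<sigma>)) * of_nat (card {g \<in> cyc (sigma \<alpha>). ct {1..n} g = ct {1..n} \<sigma>})"
    unfolding of_nat_mult[symmetric] fix_alpha[OF assms] ..
  thus ?thesis unfolding Cser_eq[OF assms(1)] using zp cp by (simp add: field_simps)
qed

lemma conj2:
  assumes \<alpha>: "\<alpha> \<in> partitions n" and \<beta>: "\<beta> \<in> partitions n"
  shows "kron (Cser \<alpha>) (Cser \<beta>) = (\<lambda>\<nu>. \<Sum>\<mu>\<in>partitions n. of_nat (num_types \<alpha> \<beta> \<mu>) * Cser \<mu> \<nu>)"
proof
  fix \<nu>
  show "kron (Cser \<alpha>) (Cser \<beta>) \<nu> = (\<Sum>\<mu>\<in>partitions n. of_nat (num_types \<alpha> \<beta> \<mu>) * Cser \<mu> \<nu>)"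
  proof (cases "\<exists>\<sigma>. \<sigma> permutes {1..n} \<and> ct {1..n} \<sigma> = \<nu>")
    case False
    thus ?thesis unfolding kron_def using Cser_zero[OF _ False] \<alpha> by simp
  next
    case True
    then obtain \<sigma> where \<sigma>: "\<sigma> permutes {1..n}" and \<nu>: "ct {1..n} \<sigma> = \<nu>" by blast
    have zp: "zee \<nu> > 0" using ct_partition[OF \<sigma>] \<nu> unfolding partitions_def by (auto intro: zee_pos)
    let ?Fa = "{s \<in> Cspec \<alpha> {1..n}. act n \<sigma> s = s}"
    let ?Fb = "{s \<in> Cspec \<beta> {1..n}. act n \<sigma> s = s}"
    have "{y \<in> Cspec \<alpha> {1..n} \<times> Cspec \<beta> {1..n}. ap n \<sigma> y = y} = ?Fa \<times> ?Fb"
      unfolding ap_def by auto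
    hence "card {y \<in> Cspec \<alpha> {1..n} \<times> Cspec \<beta> {1..n}. ap n \<sigma> y = y} = card ?Fa * card ?Fb"
      by (simp add: card_cartesian_product)
    hence "(of_nat (card ?Fa) :: rat) * of_nat (card ?Fb)
        = (\<Sum>\<mu>\<in>partitions n. of_nat (num_types \<alpha> \<beta> \<mu>) * (of_nat (zee \<nu>) * Cser \<mu> \<nu>))"
      using fix_X[OF \<alpha> \<beta> \<sigma>] \<nu> by simp
    also have "\<dots> = of_nat (zee \<nu>) * (\<Sum>\<mu>\<in>partitions n. of_nat (num_types \<alpha> \<beta> \<mu>) * Cser \<mu> \<nu>)"
      by (simp add: sum_distrib_left algebra_simps)
    finally have e: "(of_nat (card ?Fa) :: rat) * of_nat (card ?Fb) =
        of_nat (zee \<nu>) * (\<Sum>\<mu>\<in>partitions n. of_nat (num_types \<alpha> \<beta> \<mu>) * Cser \<mu> \<nu>)" .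
    have "kron (Cser \<alpha>) (Cser \<beta>) \<nu>
        = of_nat (zee \<nu>) * (of_nat (card ?Fa) / of_nat (zee \<nu>)) * (of_nat (card ?Fb) / of_nat (zee \<nu>))"
      unfolding kron_def using Cser_fix[OF \<alpha> \<sigma>] Cser_fix[OF \<beta> \<sigma>] \<nu> by simp
    also have "\<dots> = (of_nat (card ?Fa) * of_nat (card ?Fb)) / of_nat (zee \<nu>)"
      using zp by (simp add: field_simps)
    also have "\<dots> = (\<Sum>\<mu>\<in>partitions n. of_nat (num_types \<alpha> \<beta> \<mu>) * Cser \<mu> \<nu>)"
      unfolding e using zp by simp
    finally show ?thesis .
  qed
qed

lemma Cser_nonzero:
  assumes "\<mu> \<in> partitions n" "Cser \<mu> \<nu> \<noteq> 0"
  shows "\<exists>g\<in>cyc (sigma \<mu>). ct {1..n} g = \<nu>"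
  using assms(2) unfolding Cser_eq[OF assms(1)] by (auto simp: card_eq_0_iff)

lemma Cser_diag:
  assumes "\<mu> \<in> partitions n"
  shows "Cser \<mu> \<mu> \<noteq> 0"
proof -
  have sp: "sigma \<mu> permutes {1..n}" using sigma_perm[OF assms] .
  have fin: "finite (cyc (sigma \<mu>))" using finite_cyc[OF finite_atLeastAtMost sp] .
  have "sigma \<mu> \<in> {g \<in> cyc (sigma \<mu>). ct {1..n} g = \<mu>}" using c_in_cyc sigma_ct[OF assms] by simp
  hence "card {g \<in> cyc (sigma \<mu>). ct {1..n} g = \<mu>} > 0" using fin by (auto simp: card_gt_0_iff)
  thus ?thesis unfolding Cser_eq[OF assms] using card_cyc_pos[OF sp] by simp
qed

lemma lin_indep:
  fixes c :: "nat multiset \<Rightarrow> rat"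
  assumes "\<forall>\<nu>. (\<Sum>\<mu>\<in>partitions n. c \<mu> * Cser \<mu> \<nu>) = 0"
  shows "\<forall>\<mu>\<in>partitions n. c \<mu> = 0"
proof (rule ccontr)
  assume "\<not> (\<forall>\<mu>\<in>partitions n. c \<mu> = 0)"
  define Z where "Z = {\<mu> \<in> partitions n. c \<mu> \<noteq> 0}"
  have Zne: "Z \<noteq> {}" using \<open>\<not> _\<close> unfolding Z_def by auto
  have finZ: "finite Z" unfolding Z_def using finite_partitions by simp
  define m where "m = Min (size ` Z)"
  have "m \<in> size ` Z" unfolding m_def using finZ Zne by (intro Min_in) auto
  then obtain \<mu>0 where \<mu>0: "\<mu>0 \<in> Z" "size \<mu>0 = m" by (metis imageE)
  have mmin: "\<mu> \<in> Z \<Longrightarrow> size \<mu>0 \<le> size \<mu>" for \<mu> using finZ \<mu>0(2) unfolding m_def by simp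
  have p0: "\<mu>0 \<in> partitions n" and c0: "c \<mu>0 \<noteq> 0" using \<mu>0(1) unfolding Z_def by auto
  have other: "c \<mu> * Cser \<mu> \<mu>0 = 0" if "\<mu> \<in> partitions n - {\<mu>0}" for \<mu>
  proof (rule ccontr)
    assume ne: "c \<mu> * Cser \<mu> \<mu>0 \<noteq> 0"
    hence "\<mu> \<in> Z" using that unfolding Z_def by auto
    have p: "\<mu> \<in> partitions n" using that by simp
    obtain g where g: "g \<in> cyc (sigma \<mu>)" "ct {1..n} g = \<mu>0" using Cser_nonzero[OF p] ne by auto
    have sp: "sigma \<mu> permutes {1..n}" using sigma_perm[OF p] .
    have "size \<mu> \<le> size \<mu>0" using tri(1)[OF sp g(1)] g(2) sigma_ct[OF p] by simp
    moreover have "size \<mu>0 \<le> size \<mu>" using mmin[OF \<open>\<mu> \<in> Z\<close>] .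
    ultimately have "\<mu>0 = \<mu>" using tri(2)[OF sp g(1)] g(2) sigma_ct[OF p] by simp
    thus False using that by simp
  qed
  have "0 = (\<Sum>\<mu>\<in>partitions n. c \<mu> * Cser \<mu> \<mu>0)" using assms by simp
  also have "\<dots> = c \<mu>0 * Cser \<mu>0 \<mu>0 + (\<Sum>\<mu>\<in>partitions n - {\<mu>0}. c \<mu> * Cser \<mu> \<mu>0)"
    using sum.remove[OF finite_partitions p0] by simp
  also have "(\<Sum>\<mu>\<in>partitions n - {\<mu>0}. c \<mu> * Cser \<mu> \<mu>0) = 0"
    using other by (intro sum.neutral) blast
  finally have "c \<mu>0 * Cser \<mu>0 \<mu>0 = 0" by simp
  thus False using c0 Cser_diag[OF p0] by simp
qed

theorem mainTheorem10:
  fixes \<alpha> \<beta> :: "nat multiset" and n :: nat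
  assumes "\<alpha> \<in> partitions n" and "\<beta> \<in> partitions n"
  shows "(\<forall>\<mu> \<in> partitions n. \<forall>(U :: 'a set) (V :: 'b set) h.
            finite U \<longrightarrow> bij_betw h U V \<longrightarrow>
            Cmu \<alpha> \<beta> \<mu> U \<subseteq> Cspec \<alpha> U \<times> Cspec \<beta> U \<and>
            (\<forall>(s, t) \<in> Cmu \<alpha> \<beta> \<mu> U. (act n h s, act n h t) \<in> Cmu \<alpha> \<beta> \<mu> V))
       \<and> kron (Cser \<alpha>) (Cser \<beta>)
           = (\<lambda>\<nu>. \<Sum>\<mu>\<in>partitions n. of_nat (num_types \<alpha> \<beta> \<mu>) * Cser \<mu> \<nu>)
       \<and> (\<forall>b :: nat multiset \<Rightarrow> rat.
            kron (Cser \<alpha>) (Cser \<beta>) = (\<lambda>\<nu>. \<Sum>\<mu>\<in>partitions n. b \<mu> * Cser \<mu> \<nu>)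
            \<longrightarrow> (\<forall>\<mu> \<in> partitions n. b \<mu> = of_nat (num_types \<alpha> \<beta> \<mu>)))"
proof (intro conjI)
  show "\<forall>\<mu> \<in> partitions n. \<forall>(U :: 'a set) (V :: 'b set) h.
            finite U \<longrightarrow> bij_betw h U V \<longrightarrow>
            Cmu \<alpha> \<beta> \<mu> U \<subseteq> Cspec \<alpha> U \<times> Cspec \<beta> U \<and>
            (\<forall>(s, t) \<in> Cmu \<alpha> \<beta> \<mu> U. (act n h s, act n h t) \<in> Cmu \<alpha> \<beta> \<mu> V)"
    using conj1[OF assms] by blast
  show c2: "kron (Cser \<alpha>) (Cser \<beta>) = (\<lambda>\<nu>. \<Sum>\<mu>\<in>partitions n. of_nat (num_types \<alpha> \<beta> \<mu>) * Cser \<mu> \<nu>)"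
    using conj2[OF assms] .
  show "\<forall>b :: nat multiset \<Rightarrow> rat.
            kron (Cser \<alpha>) (Cser \<beta>) = (\<lambda>\<nu>. \<Sum>\<mu>\<in>partitions n. b \<mu> * Cser \<mu> \<nu>)
            \<longrightarrow> (\<forall>\<mu> \<in> partitions n. b \<mu> = of_nat (num_types \<alpha> \<beta> \<mu>))"
  proof (intro allI impI)
    fix b :: "nat multiset \<Rightarrow> rat"
    assume hb: "kron (Cser \<alpha>) (Cser \<beta>) = (\<lambda>\<nu>. \<Sum>\<mu>\<in>partitions n. b \<mu> * Cser \<mu> \<nu>)"
    have "\<forall>\<nu>. (\<Sum>\<mu>\<in>partitions n. (b \<mu> - of_nat (num_types \<alpha> \<beta> \<mu>)) * Cser \<mu> \<nu>) = 0"
    proof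
      fix \<nu>
      have "(\<Sum>\<mu>\<in>partitions n. b \<mu> * Cser \<mu> \<nu>) = (\<Sum>\<mu>\<in>partitions n. of_nat (num_types \<alpha> \<beta> \<mu>) * Cser \<mu> \<nu>)"
        using fun_cong[OF hb, of \<nu>] fun_cong[OF c2, of \<nu>] by simp
      thus "(\<Sum>\<mu>\<in>partitions n. (b \<mu> - of_nat (num_types \<alpha> \<beta> \<mu>)) * Cser \<mu> \<nu>) = 0"
        by (simp add: left_diff_distrib sum_subtractf)
    qed
    from lin_indep[OF this] show "\<forall>\<mu> \<in> partitions n. b \<mu> = of_nat (num_types \<alpha> \<beta> \<mu>)" by simp
  qed
qed

end
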